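(* Every map in $\mathcal{UM}^0_{ABAB}$ contains at least one chequered quadrangle (type 4) or at least one opposite colored cylinder (type 7) among its non-root 2-cells.
   Context: Colors: red corresponds to the letter $A$, blue to the letter $B$. The allowed non-root 2-cells, each with a colored boundary, are the following seven types. (1) Red quadrangle: a disc bounded by a 4-gon with all edges red. (2) Blue quadrangle: a disc bounded by a 4-gon with all edges blue. (3) Adjacent colored quadrangle: a disc bounded by a 4-gon whose edge colors in cyclic order are red, red, blue, blue. (4) Chequered quadrangle: a disc bounded by a 4-gon whose edge colors in cyclic order are red, blue, red, blue. (5) Red cylinder: a cylinder whose two boundary circles are each a 2-gon with red edges. (6) Blue cylinder: a cylinder whose two boundary circles are each a 2-gon with blue edges. (7) Opposite colored cylinder: a cylinder whose one boundary circle is a 2-gon with red edges and whose other boundary circle is a 2-gon with blue edges. The root face is a disc bounded by a 4-gon with edge colors in cyclic order red, blue, red, blue (the word $ABAB$), with one marked edge. A 2-colored unstable map with root word $ABAB$ consists of the root face together with a finite collection of copies of the allowed 2-cells. All boundary edges are partitioned into pairs, each pair consisting of two edges of the same color, and the two edges of each pair are identified orientation-reversingly, so that the result is a closed oriented surface. Maps are considered up to orientation-preserving homeomorphism preserving colors and the root. $\mathcal{UM}^0_{ABAB}$ is the set of such maps for which the resulting closed surface is connected and homeomorphic to the 2-sphere (genus zero). *)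

theory Defs
  imports Main
begin

text \<open>A map is given by the list ts of types of its non-root 2-cells (cell 0 is the root face,
  cell i (i \<ge> 1) has type ts!(i-1)) together with a gluing involution alpha on the set
  of boundary sides. A side is a triple (cell, boundary circle, position). Each boundary
  circle is traversed in the orientation induced by the cell; consecutive sides are given
  by nxt. Gluing is orientation-reversing.\<close>

datatype color = Red | Blue

datatype cell_type =
    RedQuad | BlueQuad | AdjQuad | CheqQuad | RedCyl | BlueCyl | OppCyl

type_synonym side = "nat \<times> nat \<times> nat"

fun cell_bd :: "cell_type \<Rightarrow> color list list" where
  "cell_bd RedQuad = [[Red, Red, Red, Red]]"
| "cell_bd BlueQuad = [[Blue, Blue, Blue, Blue]]"
| "cell_bd AdjQuad = [[Red, Red, Blue, Blue]]"
| "cell_bd CheqQuad = [[Red, Blue, Red, Blue]]"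
| "cell_bd RedCyl = [[Red, Red], [Red, Red]]"
| "cell_bd BlueCyl = [[Blue, Blue], [Blue, Blue]]"
| "cell_bd OppCyl = [[Red, Red], [Blue, Blue]]"

fun is_disc :: "cell_type \<Rightarrow> bool" where
  "is_disc RedQuad = True"
| "is_disc BlueQuad = True"
| "is_disc AdjQuad = True"
| "is_disc CheqQuad = True"
| "is_disc RedCyl = False"
| "is_disc BlueCyl = False"
| "is_disc OppCyl = False"

definition root_bd :: "color list list" where
  "root_bd = [[Red, Blue, Red, Blue]]"

definition cbd :: "cell_type list \<Rightarrow> nat \<Rightarrow> color list list" where
  "cbd ts i = (if i = 0 then root_bd else cell_bd (ts ! (i - 1)))"

definition sides :: "cell_type list \<Rightarrow> side set" where
  "sides ts = {(i, j, k). i \<le> length ts \<and> j < length (cbd ts i) \<and> k < length (cbd ts i ! j)}"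

definition side_color :: "cell_type list \<Rightarrow> side \<Rightarrow> color" where
  "side_color ts s = (case s of (i, j, k) \<Rightarrow> cbd ts i ! j ! k)"

definition nxt :: "cell_type list \<Rightarrow> side \<Rightarrow> side" where
  "nxt ts s = (case s of (i, j, k) \<Rightarrow> (i, j, (k + 1) mod length (cbd ts i ! j)))"

definition valid_gluing :: "cell_type list \<Rightarrow> (side \<Rightarrow> side) \<Rightarrow> bool" where
  "valid_gluing ts alpha \<longleftrightarrow>
     (\<forall>s \<in> sides ts. alpha s \<in> sides ts \<and> alpha (alpha s) = s \<and> alpha s \<noteq> s
        \<and> side_color ts (alpha s) = side_color ts s)"

text \<open>Vertices of the glued surface: orbits of nxt o alpha on sides (each side represents
  its starting corner).\<close>
definition vert_rel :: "cell_type list \<Rightarrow> (side \<Rightarrow> side) \<Rightarrow> side rel" where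
  "vert_rel ts alpha = {(s, t). s \<in> sides ts \<and> t \<in> sides ts \<and>
      (\<exists>n. t = ((nxt ts \<circ> alpha) ^^ n) s)}"

definition num_vertices :: "cell_type list \<Rightarrow> (side \<Rightarrow> side) \<Rightarrow> nat" where
  "num_vertices ts alpha = card (sides ts // vert_rel ts alpha)"

definition num_edges :: "cell_type list \<Rightarrow> nat" where
  "num_edges ts = card (sides ts) div 2"

text \<open>Number of disc cells (the root face plus the quadrangles); cylinders contribute
  Euler characteristic 0.\<close>
definition num_discs :: "cell_type list \<Rightarrow> nat" where
  "num_discs ts = 1 + length (filter is_disc ts)"

definition euler_char :: "cell_type list \<Rightarrow> (side \<Rightarrow> side) \<Rightarrow> int" where
  "euler_char ts alpha = int (num_vertices ts alpha) - int (num_edges ts) + int (num_discs ts)"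

definition adj_rel :: "cell_type list \<Rightarrow> (side \<Rightarrow> side) \<Rightarrow> side rel" where
  "adj_rel ts alpha = {(s, alpha s) | s. s \<in> sides ts} \<union>
     {(s, t). s \<in> sides ts \<and> t \<in> sides ts \<and> fst s = fst t}"

definition connected_map :: "cell_type list \<Rightarrow> (side \<Rightarrow> side) \<Rightarrow> bool" where
  "connected_map ts alpha \<longleftrightarrow>
     (\<forall>s \<in> sides ts. \<forall>t \<in> sides ts. (s, t) \<in> (adj_rel ts alpha)\<^sup>*)"

definition UM0_ABAB :: "cell_type list \<Rightarrow> (side \<Rightarrow> side) \<Rightarrow> bool" where
  "UM0_ABAB ts alpha \<longleftrightarrow>
     valid_gluing ts alpha \<and> connected_map ts alpha \<and> euler_char ts alpha = 2"

end

theory Submission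
  imports Defs
begin


definition conn :: "('a \<times> 'a) set \<Rightarrow> ('a \<times> 'a) set" where
  "conn E = (E \<union> E\<inverse>)\<^sup>*"

definition comps :: "'a set \<Rightarrow> ('a \<times> 'a) set \<Rightarrow> nat" where
  "comps D E = card (D // conn E)"

definition Gr :: "'a set \<Rightarrow> ('a \<Rightarrow> 'a) \<Rightarrow> ('a \<times> 'a) set" where
  "Gr D f = {(x, f x) | x. x \<in> D}"

lemma conn_refl[simp]: "(x, x) \<in> conn E"
  by (simp add: conn_def)

lemma conn_sym: "(x, y) \<in> conn E \<Longrightarrow> (y, x) \<in> conn E"
proof -
  assume "(x, y) \<in> conn E"
  hence "(y, x) \<in> ((E \<union> E\<inverse>)\<inverse>)\<^sup>*" unfolding conn_def by (simp add: rtrancl_converse)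
  moreover have "(E \<union> E\<inverse>)\<inverse> = E \<union> E\<inverse>" by auto
  ultimately show ?thesis unfolding conn_def by simp
qed

lemma conn_trans: "(x, y) \<in> conn E \<Longrightarrow> (y, z) \<in> conn E \<Longrightarrow> (x, z) \<in> conn E"
  unfolding conn_def by (rule rtrancl_trans)

lemma conn_edge: "(x, y) \<in> E \<Longrightarrow> (x, y) \<in> conn E"
  unfolding conn_def by auto

lemma conn_edge': "(x, y) \<in> E \<Longrightarrow> (y, x) \<in> conn E"
  unfolding conn_def by auto

lemma conn_mono: "E \<subseteq> conn E' \<Longrightarrow> conn E \<subseteq> conn E'"
proof -
  assume a: "E \<subseteq> conn E'"
  have "E \<union> E\<inverse> \<subseteq> conn E'"
  proof
    fix p assume "p \<in> E \<union> E\<inverse>"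
    then obtain x y where p: "p = (x, y)" "(x, y) \<in> E \<or> (y, x) \<in> E" by (cases p) auto
    show "p \<in> conn E'"
      using p(2)
    proof
      assume "(x, y) \<in> E" then show ?thesis using a p(1) by blast
    next
      assume "(y, x) \<in> E" hence "(y, x) \<in> conn E'" using a by blast
      then show ?thesis using p(1) conn_sym[of y x E'] by simp
    qed
  qed
  hence "(E \<union> E\<inverse>)\<^sup>* \<subseteq> (conn E')\<^sup>*" by (rule rtrancl_mono)
  thus ?thesis unfolding conn_def by simp
qed

lemma conn_subset: "E \<subseteq> E' \<Longrightarrow> conn E \<subseteq> conn E'"
  by (rule conn_mono) (auto intro: conn_edge)

lemma conn_Image_eq:
  assumes "(x, y) \<in> conn E" shows "conn E `` {x} = conn E `` {y}"
proof
  show "conn E `` {x} \<subseteq> conn E `` {y}"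
  proof
    fix z assume "z \<in> conn E `` {x}"
    hence "(x, z) \<in> conn E" by simp
    hence "(y, z) \<in> conn E" by (rule conn_trans[OF conn_sym[OF assms]])
    thus "z \<in> conn E `` {y}" by simp
  qed
  show "conn E `` {y} \<subseteq> conn E `` {x}"
  proof
    fix z assume "z \<in> conn E `` {y}"
    hence "(y, z) \<in> conn E" by simp
    hence "(x, z) \<in> conn E" by (rule conn_trans[OF assms])
    thus "z \<in> conn E `` {x}" by simp
  qed
qed

lemma finite_quot: "finite D \<Longrightarrow> finite (D // R)"
  unfolding quotient_def by auto

lemma Image_conn_sub:
  assumes "conn E \<subseteq> conn E'"
  shows "conn E' `` (conn E `` {x}) = conn E' `` {x}"
proof
  show "conn E' `` (conn E `` {x}) \<subseteq> conn E' `` {x}"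
  proof
    fix z assume "z \<in> conn E' `` (conn E `` {x})"
    then obtain y where y: "(x, y) \<in> conn E" "(y, z) \<in> conn E'" by auto
    have "(x, y) \<in> conn E'" using y(1) assms by blast
    thus "z \<in> conn E' `` {x}" using conn_trans[OF _ y(2)] by simp
  qed
  show "conn E' `` {x} \<subseteq> conn E' `` (conn E `` {x})"
  proof
    fix z assume "z \<in> conn E' `` {x}"
    moreover have "x \<in> conn E `` {x}" by simp
    ultimately show "z \<in> conn E' `` (conn E `` {x})" by blast
  qed
qed

lemma comps_mono:
  assumes "finite D" "conn E \<subseteq> conn E'"
  shows "comps D E' \<le> comps D E"
proof -
  let ?f = "\<lambda>X. conn E' `` X"
  have "D // conn E' = ?f ` (D // conn E)"
  proof -
    have "\<And>x. conn E' `` (conn E `` {x}) = conn E' `` {x}"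
      using Image_conn_sub[OF assms(2)] by blast
    thus ?thesis unfolding quotient_def by auto
  qed
  thus ?thesis unfolding comps_def using card_image_le finite_quot assms(1) by metis
qed

lemma comps_strict:
  assumes "finite D" "conn E \<subseteq> conn E'" "a \<in> D" "b \<in> D" "(a, b) \<in> conn E'" "(a, b) \<notin> conn E"
  shows "comps D E' < comps D E"
proof -
  let ?f = "\<lambda>X. conn E' `` X"
  have img: "\<And>x. conn E' `` (conn E `` {x}) = conn E' `` {x}"
    using Image_conn_sub[OF assms(2)] by blast
  have eq: "D // conn E' = ?f ` (D // conn E)"
    using img unfolding quotient_def by auto
  have "\<not> inj_on ?f (D // conn E)"
  proof
    assume inj: "inj_on ?f (D // conn E)"
    have A: "conn E `` {a} \<in> D // conn E" "conn E `` {b} \<in> D // conn E"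
      using assms(3,4) unfolding quotient_def by auto
    have "?f (conn E `` {a}) = ?f (conn E `` {b})"
      using img conn_Image_eq[OF assms(5)] by simp
    hence "conn E `` {a} = conn E `` {b}" by (rule inj_onD[OF inj _ A])
    moreover have "b \<in> conn E `` {b}" by simp
    ultimately have "b \<in> conn E `` {a}" by simp
    thus False using assms(6) by auto
  qed
  hence "card (?f ` (D // conn E)) \<noteq> card (D // conn E)"
    using eq_card_imp_inj_on finite_quot assms(1) by blast
  moreover have "card (?f ` (D // conn E)) \<le> card (D // conn E)"
    using card_image_le finite_quot assms(1) by blast
  ultimately show ?thesis unfolding comps_def eq by simp
qed

lemma conn_insert_cases:
  assumes "(x, y) \<in> conn (insert (a, b) E)"
  shows "(x, y) \<in> conn E \<or> ((x, a) \<in> conn E \<and> (b, y) \<in> conn E) \<or> ((x, b) \<in> conn E \<and> (a, y) \<in> conn E)"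
  using assms unfolding conn_def[of "insert (a,b) E"]
proof (induction rule: rtrancl_induct)
  case base
  then show ?case by simp
next
  case (step v w)
  have "(v, w) \<in> E \<or> (w, v) \<in> E \<or> (v = a \<and> w = b) \<or> (v = b \<and> w = a)"
    using step.hyps(2) by auto
  hence e: "(v, w) \<in> conn E \<or> (v = a \<and> w = b) \<or> (v = b \<and> w = a)"
    using conn_edge[of v w E] conn_edge'[of w v E] by blast
  from e show ?case
  proof (elim disjE conjE)
    assume c1: "(v, w) \<in> conn E"
    from step.IH show ?thesis
    proof (elim disjE conjE)
      assume h: "(x, v) \<in> conn E" show ?thesis using conn_trans[OF h c1] by simp
    next
      assume h: "(x, a) \<in> conn E" "(b, v) \<in> conn E" show ?thesis using conn_trans[OF h(2) c1] h(1) by simp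
    next
      assume h: "(x, b) \<in> conn E" "(a, v) \<in> conn E" show ?thesis using conn_trans[OF h(2) c1] h(1) by simp
    qed
  next
    assume c2: "v = a" "w = b"
    from step.IH show ?thesis
    proof (elim disjE conjE)
      assume "(x, v) \<in> conn E" then show ?thesis unfolding c2 by simp
    next
      assume "(x, a) \<in> conn E" "(b, v) \<in> conn E" then show ?thesis unfolding c2 by simp
    next
      assume "(x, b) \<in> conn E" "(a, v) \<in> conn E" then show ?thesis unfolding c2 by simp
    qed
  next
    assume c3: "v = b" "w = a"
    from step.IH show ?thesis
    proof (elim disjE conjE)
      assume "(x, v) \<in> conn E" then show ?thesis unfolding c3 by simp
    next
      assume "(x, a) \<in> conn E" "(b, v) \<in> conn E" then show ?thesis unfolding c3 by simp
    next
      assume "(x, b) \<in> conn E" "(a, v) \<in> conn E" then show ?thesis unfolding c3 by simp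
    qed
  qed
qed

lemma conn_insert_same:
  assumes "(a, b) \<in> conn E"
  shows "conn (insert (a, b) E) = conn E"
proof
  show "conn (insert (a, b) E) \<subseteq> conn E"
  proof
    fix p assume "p \<in> conn (insert (a, b) E)"
    then obtain x y where p: "p = (x, y)" "(x, y) \<in> conn (insert (a, b) E)" by (cases p) auto
    have ba: "(b, a) \<in> conn E" using assms by (rule conn_sym)
    from conn_insert_cases[OF p(2)] show "p \<in> conn E"
    proof (elim disjE conjE)
      assume "(x, y) \<in> conn E" then show ?thesis using p(1) by simp
    next
      assume "(x, a) \<in> conn E" "(b, y) \<in> conn E"
      then show ?thesis using p(1) conn_trans[OF conn_trans[OF _ assms]] by blast
    next
      assume "(x, b) \<in> conn E" "(a, y) \<in> conn E"
      then show ?thesis using p(1) conn_trans[OF conn_trans[OF _ ba]] by blast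
    qed
  qed
  show "conn E \<subseteq> conn (insert (a, b) E)" by (rule conn_subset) auto
qed

lemma comps_insert:
  assumes "finite D" "a \<in> D"
  shows "comps D E \<le> comps D (insert (a, b) E) + 1"
proof -
  let ?E' = "insert (a, b) E"
  have key: "\<And>x. (x, a) \<notin> conn ?E' \<Longrightarrow> conn E `` {x} = conn ?E' `` {x}"
  proof -
    fix x assume nx: "(x, a) \<notin> conn ?E'"
    have ab: "(a, b) \<in> conn ?E'" by (rule conn_edge) simp
    have sub: "conn E \<subseteq> conn ?E'" by (rule conn_subset) auto
    show "conn E `` {x} = conn ?E' `` {x}"
    proof
      show "conn E `` {x} \<subseteq> conn ?E' `` {x}" using sub by auto
      show "conn ?E' `` {x} \<subseteq> conn E `` {x}"
      proof
        fix y assume "y \<in> conn ?E' `` {x}"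
        hence "(x, y) \<in> conn ?E'" by auto
        have ba: "(b, a) \<in> conn ?E'" using ab by (rule conn_sym)
        from conn_insert_cases[OF \<open>(x, y) \<in> conn ?E'\<close>] show "y \<in> conn E `` {x}"
        proof (elim disjE conjE)
          assume "(x, y) \<in> conn E" then show ?thesis by simp
        next
          assume "(x, a) \<in> conn E" then show ?thesis using nx sub by blast
        next
          assume "(x, b) \<in> conn E"
          hence "(x, b) \<in> conn ?E'" using sub by blast
          hence "(x, a) \<in> conn ?E'" using conn_trans[OF _ ba] by blast
          then show ?thesis using nx by blast
        qed
      qed
    qed
  qed
  have "D // conn E \<subseteq> {conn E `` {a}, conn E `` {b}} \<union> (D // conn ?E' - {conn ?E' `` {a}})"
  proof
    fix X assume "X \<in> D // conn E"
    then obtain x where x: "x \<in> D" "X = conn E `` {x}" unfolding quotient_def by auto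
    show "X \<in> {conn E `` {a}, conn E `` {b}} \<union> (D // conn ?E' - {conn ?E' `` {a}})"
    proof (cases "(x, a) \<in> conn ?E'")
      case True
      from conn_insert_cases[OF this] have "(x, a) \<in> conn E \<or> (x, b) \<in> conn E"
        by blast
      then have "X = conn E `` {a} \<or> X = conn E `` {b}"
        using x(2) conn_Image_eq by metis
      then show ?thesis by blast
    next
      case False
      have X: "X = conn ?E' `` {x}" using key[OF False] x by simp
      have ne: "conn ?E' `` {x} \<noteq> conn ?E' `` {a}"
      proof
        assume eq: "conn ?E' `` {x} = conn ?E' `` {a}"
        have "a \<in> conn ?E' `` {a}" by simp
        hence "a \<in> conn ?E' `` {x}" using eq by simp
        thus False using False by simp
      qed
      have "conn ?E' `` {x} \<in> D // conn ?E'" using x(1) by (rule quotientI)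
      then show ?thesis using X ne by blast
    qed
  qed
  hence "card (D // conn E) \<le> card ({conn E `` {a}, conn E `` {b}} \<union> (D // conn ?E' - {conn ?E' `` {a}}))"
    by (intro card_mono) (simp_all add: finite_quot assms)
  also have "\<dots> \<le> card {conn E `` {a}, conn E `` {b}} + card (D // conn ?E' - {conn ?E' `` {a}})"
    by (rule card_Un_le)
  also have "\<dots> \<le> 2 + (card (D // conn ?E') - 1)"
  proof (rule add_mono)
    show "card {conn E `` {a}, conn E `` {b}} \<le> 2" by (simp add: card_insert_if)
    have "conn ?E' `` {a} \<in> D // conn ?E'" using assms(2) by (rule quotientI)
    then show "card (D // conn ?E' - {conn ?E' `` {a}}) \<le> card (D // conn ?E') - 1"
      by (simp add: card_Diff_singleton)
  qed
  also have "\<dots> = card (D // conn ?E') + 1"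
  proof -
    have "conn ?E' `` {a} \<in> D // conn ?E'" using assms(2) by (rule quotientI)
    hence "card (D // conn ?E') \<noteq> 0" using finite_quot[OF assms(1)] by auto
    hence "card (D // conn ?E') \<ge> 1" by simp
    thus ?thesis by simp
  qed
  finally show ?thesis unfolding comps_def .
qed




lemma Gr_cong: "(\<And>x. x \<in> D \<Longrightarrow> f x = g x) \<Longrightarrow> Gr D f = Gr D g"
  unfolding Gr_def by force

lemma conn_edgeP: "p \<in> E \<Longrightarrow> p \<in> conn E"
  by (cases p) (auto intro: conn_edge)

lemma Gr_edge: "x \<in> D \<Longrightarrow> (x, f x) \<in> conn (Gr D f)"
  unfolding Gr_def by (rule conn_edge) auto

lemma funpow_in: "f ` D \<subseteq> D \<Longrightarrow> x \<in> D \<Longrightarrow> (f ^^ n) x \<in> D"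
  by (induction n) auto

lemma funpow_cancel:
  assumes "inj_on f D" "f ` D \<subseteq> D" "x \<in> D" "y \<in> D" "(f ^^ i) x = (f ^^ i) y"
  shows "x = y"
  using assms(5)
proof (induction i)
  case 0 then show ?case by simp
next
  case (Suc i)
  have "f ((f ^^ i) x) = f ((f ^^ i) y)" using Suc.prems by simp
  moreover have "(f ^^ i) x \<in> D" "(f ^^ i) y \<in> D" using funpow_in assms by auto
  ultimately have "(f ^^ i) x = (f ^^ i) y" using assms(1) by (auto dest: inj_onD)
  then show ?case by (rule Suc.IH)
qed

lemma period:
  assumes "finite D" "f ` D \<subseteq> D" "inj_on f D" "x \<in> D"
  shows "\<exists>n>0. (f ^^ n) x = x"
proof -
  let ?g = "\<lambda>k. (f ^^ k) x"
  have "\<not> inj_on ?g {..card D}"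
  proof
    assume "inj_on ?g {..card D}"
    moreover have "?g ` {..card D} \<subseteq> D" using funpow_in assms by auto
    ultimately have "card {..card D} \<le> card D" using card_inj_on_le assms(1) by blast
    thus False by simp
  qed
  then obtain i j where ij: "i \<noteq> j" "?g i = ?g j" unfolding inj_on_def by blast
  have "\<exists>i j. i < j \<and> ?g i = ?g j"
    using ij by (metis linorder_neqE_nat)
  then obtain i j where ij: "i < j" "?g i = ?g j" by blast
  have "(f ^^ (i + (j - i))) x = (f ^^ i) ((f ^^ (j - i)) x)" by (simp add: funpow_add)
  hence "(f ^^ i) ((f ^^ (j - i)) x) = (f ^^ j) x" using ij(1) by simp
  hence "(f ^^ i) ((f ^^ (j - i)) x) = (f ^^ i) x" using ij(2) by simp
  hence "(f ^^ (j - i)) x = x"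
    using funpow_cancel[OF assms(3,2)] funpow_in[OF assms(2,4)] assms(4) by blast
  thus ?thesis using ij(1) by (intro exI[of _ "j - i"]) auto
qed

lemma path_P:
  assumes "f ` D \<subseteq> D" "x \<in> D"
  shows "(x, (f ^^ k) x) \<in> conn (Gr D f)"
proof (induction k)
  case 0 then show ?case by simp
next
  case (Suc k)
  have "((f ^^ k) x, f ((f ^^ k) x)) \<in> conn (Gr D f)"
    by (rule Gr_edge[OF funpow_in[OF assms]])
  hence "((f ^^ k) x, (f ^^ Suc k) x) \<in> conn (Gr D f)" by simp
  then show ?case by (rule conn_trans[OF Suc.IH])
qed

definition sw :: "'a \<Rightarrow> 'a \<Rightarrow> 'a \<Rightarrow> 'a" where
  "sw a b x = (if x = a then b else if x = b then a else x)"

lemma sw_comm: "sw a b = sw b a"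
  unfolding sw_def by auto

lemma path_Q:
  assumes "f ` D \<subseteq> D" "y \<in> D" "\<forall>k<m. (f ^^ k) y \<noteq> a \<and> (f ^^ k) y \<noteq> b"
  shows "(y, (f ^^ m) y) \<in> conn (Gr D (f \<circ> sw a b))"
  using assms(3)
proof (induction m)
  case 0 then show ?case by simp
next
  case (Suc m)
  let ?z = "(f ^^ m) y"
  have z: "?z \<in> D" "?z \<noteq> a" "?z \<noteq> b" using funpow_in[OF assms(1,2)] Suc.prems by auto
  have "(?z, (f \<circ> sw a b) ?z) \<in> conn (Gr D (f \<circ> sw a b))" by (rule Gr_edge[OF z(1)])
  moreover have "(f \<circ> sw a b) ?z = (f ^^ Suc m) y" using z by (simp add: sw_def)
  ultimately have h1: "(?z, (f ^^ Suc m) y) \<in> conn (Gr D (f \<circ> sw a b))" by simp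
  have "\<forall>k<m. (f ^^ k) y \<noteq> a \<and> (f ^^ k) y \<noteq> b" using Suc.prems by simp
  note h2 = Suc.IH[OF this]
  show ?case by (rule conn_trans[OF h2 h1])
qed

lemma Qcyc:
  assumes "finite D" "f ` D \<subseteq> D" "inj_on f D" "a \<in> D" "b \<in> D" "(a, b) \<notin> conn (Gr D f)"
  shows "(f b, b) \<in> conn (Gr D (f \<circ> sw a b))"
proof -
  let ?P = "\<lambda>n. n > 0 \<and> (f ^^ n) b = b"
  define n where "n = (LEAST n. ?P n)"
  have ex: "\<exists>n. ?P n" using period[OF assms(1,2,3,5)] by simp
  have n: "?P n" unfolding n_def by (rule LeastI_ex[OF ex])
  have nl: "(f ^^ k) b \<noteq> b" if k: "0 < k" "k < n" for k
  proof -
    have "\<not> ?P k" using not_less_Least[of k ?P] k(2) unfolding n_def by blast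
    thus ?thesis using k(1) by simp
  qed
  have fbD: "f b \<in> D" using assms(2,5) by blast
  have "\<forall>k<n - 1. (f ^^ k) (f b) \<noteq> a \<and> (f ^^ k) (f b) \<noteq> b"
  proof (intro allI impI)
    fix k assume k: "k < n - 1"
    have e: "(f ^^ k) (f b) = (f ^^ Suc k) b" by (simp only: funpow_Suc_right comp_apply)
    have "(f ^^ Suc k) b \<noteq> b" using nl[of "Suc k"] k by simp
    moreover have "(f ^^ Suc k) b \<noteq> a"
    proof
      assume h: "(f ^^ Suc k) b = a"
      have "(b, (f ^^ Suc k) b) \<in> conn (Gr D f)" by (rule path_P[OF assms(2,5)])
      hence "(b, a) \<in> conn (Gr D f)" using h by simp
      hence "(a, b) \<in> conn (Gr D f)" by (rule conn_sym)
      thus False using assms(6) by simp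
    qed
    ultimately show "(f ^^ k) (f b) \<noteq> a \<and> (f ^^ k) (f b) \<noteq> b" using e by simp
  qed
  from path_Q[OF assms(2) fbD this] have "(f b, (f ^^ (n - 1)) (f b)) \<in> conn (Gr D (f \<circ> sw a b))" .
  moreover have "(f ^^ (n - 1)) (f b) = b"
  proof -
    have "(f ^^ (n - 1)) (f b) = (f ^^ Suc (n - 1)) b" by (simp only: funpow_Suc_right comp_apply)
    also have "Suc (n - 1) = n" using n by simp
    finally show ?thesis using n by simp
  qed
  ultimately show ?thesis by simp
qed

lemma T2:
  assumes "finite D" "f ` D \<subseteq> D" "inj_on f D" "a \<in> D" "b \<in> D" "a \<noteq> b"
    "(a, b) \<notin> conn (Gr D f)"
  shows "comps D (Gr D (f \<circ> sw a b)) < comps D (Gr D f)"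
proof -
  let ?E = "Gr D (f \<circ> sw a b)"
  have q1: "(f b, b) \<in> conn ?E" by (rule Qcyc[OF assms(1-5,7)])
  have q2: "(f a, a) \<in> conn ?E"
  proof -
    have "(b, a) \<notin> conn (Gr D f)" using assms(7) conn_sym[of b a] by blast
    hence "(f a, a) \<in> conn (Gr D (f \<circ> sw b a))" by (rule Qcyc[OF assms(1-3,5,4)])
    thus ?thesis using sw_comm[of b a] by simp
  qed
  have ea: "(a, f b) \<in> conn ?E" using Gr_edge[OF assms(4), of "f \<circ> sw a b"] by (simp add: sw_def)
  have eb: "(b, f a) \<in> conn ?E" using Gr_edge[OF assms(5), of "f \<circ> sw a b"] assms(6) by (simp add: sw_def)
  have "Gr D f \<subseteq> conn ?E"
  proof
    fix p assume "p \<in> Gr D f"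
    then obtain x where x: "x \<in> D" "p = (x, f x)" unfolding Gr_def by auto
    show "p \<in> conn ?E"
    proof (cases "x = a \<or> x = b")
      case True
      then show ?thesis
      proof
        assume "x = a" then show ?thesis using x conn_trans[OF conn_trans[OF ea q1] eb] by simp
      next
        assume "x = b" then show ?thesis using x conn_trans[OF conn_trans[OF eb q2] ea] by simp
      qed
    next
      case False
      then have "(f \<circ> sw a b) x = f x" by (simp add: sw_def)
      then show ?thesis using Gr_edge[OF x(1), of "f \<circ> sw a b"] x by simp
    qed
  qed
  hence c: "conn (Gr D f) \<subseteq> conn ?E" by (rule conn_mono)
  have ab: "(a, b) \<in> conn ?E" by (rule conn_trans[OF ea q1])
  show ?thesis by (rule comps_strict[OF assms(1) c assms(4,5) ab assms(7)])
qed

lemma T1: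
  assumes "finite D" "a \<in> D" "b \<in> D" "a \<noteq> b"
  shows "comps D (Gr D (f \<circ> sw a b)) \<le> comps D (Gr D f) + 1"
proof -
  let ?E = "Gr D (f \<circ> sw a b)"
  let ?E' = "insert (a, f a) ?E"
  have sub: "?E \<subseteq> ?E'" by auto
  have cs: "conn ?E \<subseteq> conn ?E'" by (rule conn_subset[OF sub])
  have "(a, (f \<circ> sw a b) a) \<in> conn ?E" by (rule Gr_edge[OF assms(2)])
  hence "(a, f b) \<in> conn ?E" by (simp add: sw_def)
  hence ea: "(a, f b) \<in> conn ?E'" using cs by (rule subsetD[rotated])
  have "(b, (f \<circ> sw a b) b) \<in> conn ?E" by (rule Gr_edge[OF assms(3)])
  hence "(b, f a) \<in> conn ?E" using assms(4) by (simp add: sw_def)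
  hence eb: "(b, f a) \<in> conn ?E'" using cs by (rule subsetD[rotated])
  have ei: "(a, f a) \<in> conn ?E'" by (rule conn_edge) simp
  have "Gr D f \<subseteq> conn ?E'"
  proof
    fix p assume "p \<in> Gr D f"
    then obtain x where x: "x \<in> D" "p = (x, f x)" unfolding Gr_def by auto
    show "p \<in> conn ?E'"
    proof (cases "x = a \<or> x = b")
      case True
      then show ?thesis
      proof
        assume "x = a" then show ?thesis using x ei by simp
      next
        assume "x = b" then show ?thesis using x conn_trans[OF conn_trans[OF eb conn_sym[OF ei]] ea] by simp
      qed
    next
      case False
      then have "(f \<circ> sw a b) x = f x" by (simp add: sw_def)
      moreover have "(x, (f \<circ> sw a b) x) \<in> conn ?E" by (rule Gr_edge[OF x(1)])
      ultimately have "(x, f x) \<in> conn ?E" by simp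
      hence "(x, f x) \<in> conn ?E'" using cs by (rule subsetD[rotated])
      then show ?thesis using x(2) by simp
    qed
  qed
  hence "comps D ?E' \<le> comps D (Gr D f)" by (rule comps_mono[OF assms(1) conn_mono])
  moreover have "comps D ?E \<le> comps D ?E' + 1" by (rule comps_insert[OF assms(1,2)])
  ultimately show ?thesis by simp
qed

definition aS :: "('a \<Rightarrow> 'a) \<Rightarrow> 'a set \<Rightarrow> 'a \<Rightarrow> 'a" where
  "aS al S x = (if x \<in> S then al x else x)"

lemma conn_loops:
  assumes "\<forall>x\<in>D. g x = x"
  shows "conn (E \<union> Gr D g) = conn E"
proof
  show "conn E \<subseteq> conn (E \<union> Gr D g)" by (rule conn_subset) auto
  show "conn (E \<union> Gr D g) \<subseteq> conn E"
    by (rule conn_mono) (use assms in \<open>auto simp: Gr_def intro: conn_edge\<close>)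
qed

lemma arith1: "(X::nat) \<le> Y + 1 \<Longrightarrow> 2 * (Y + P) \<le> c0 + 4 * Ko \<Longrightarrow> cS = c0 + 2 \<Longrightarrow> Kn = Ko
  \<Longrightarrow> 2 * (X + P) \<le> cS + 4 * Kn"
  by arith

lemma arith2: "(X::nat) < Y \<Longrightarrow> 2 * (Y + P) \<le> c0 + 4 * Ko \<Longrightarrow> cS = c0 + 2 \<Longrightarrow> Ko \<le> Kn + 1
  \<Longrightarrow> 2 * (X + P) \<le> cS + 4 * Kn"
  by arith

lemma euler_aux:
  assumes fin: "finite D" and phD: "\<phi> ` D \<subseteq> D" and phi: "inj_on \<phi> D"
    and al: "\<forall>x\<in>D. al x \<in> D \<and> al (al x) = x \<and> al x \<noteq> x"
  shows "S \<subseteq> D \<Longrightarrow> (\<forall>x\<in>S. al x \<in> S) \<Longrightarrow>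
    2 * (comps D (Gr D (\<phi> \<circ> aS al S)) + comps D (Gr D \<phi>)) \<le> card S + 4 * comps D (Gr D \<phi> \<union> Gr D (aS al S))"
proof (induction "card S" arbitrary: S rule: less_induct)
  case less
  show ?case
  proof (cases "S = {}")
    case True
    have "aS al S = id" using True by (auto simp: aS_def)
    hence "Gr D (\<phi> \<circ> aS al S) = Gr D \<phi>" by simp
    moreover have "conn (Gr D \<phi> \<union> Gr D (aS al S)) = conn (Gr D \<phi>)"
      using conn_loops[of D "aS al S"] True by (auto simp: aS_def)
    ultimately show ?thesis using True unfolding comps_def by simp
  next
    case False
    then obtain a where a: "a \<in> S" by auto
    define b where "b = al a"
    define S0 where "S0 = S - {a, b}"
    have aD: "a \<in> D" using a less.prems by auto
    have bS: "b \<in> S" and bD: "b \<in> D" and ab: "a \<noteq> b" and ba: "al b = a"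
      using a less.prems al aD unfolding b_def by auto
    have finS: "finite S" using less.prems(1) fin finite_subset by blast
    have sub2: "{a, b} \<subseteq> S" using a bS by simp
    have c2: "card {a, b} = 2" using ab by simp
    have "card S0 = card S - card {a, b}" unfolding S0_def
      using card_Diff_subset[OF finite_subset[OF sub2 finS] sub2] .
    moreover have "card {a, b} \<le> card S" using card_mono[OF finS sub2] .
    ultimately have cS0: "card S = card S0 + 2" using c2 by simp
    have S0D: "S0 \<subseteq> D" using less.prems(1) S0_def by auto
    have S0c: "\<forall>x\<in>S0. al x \<in> S0"
    proof
      fix x assume x: "x \<in> S0"
      hence xS: "x \<in> S" "x \<noteq> a" "x \<noteq> b" unfolding S0_def by auto
      have "al x \<noteq> a" using xS al less.prems(1) unfolding b_def by auto
      moreover have "al x \<noteq> b" using xS al less.prems(1) ba by auto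
      ultimately show "al x \<in> S0" using xS less.prems(2) unfolding S0_def by auto
    qed
    have IH: "2 * (comps D (Gr D (\<phi> \<circ> aS al S0)) + comps D (Gr D \<phi>)) \<le> card S0 + 4 * comps D (Gr D \<phi> \<union> Gr D (aS al S0))"
      using less.hyps[of S0] cS0 S0D S0c by simp
    have fun_eq: "aS al S = aS al S0 \<circ> sw a b"
    proof
      fix x show "aS al S x = (aS al S0 \<circ> sw a b) x"
        using a bS ab ba unfolding aS_def sw_def S0_def b_def by auto
    qed
    define \<pi> where "\<pi> = \<phi> \<circ> aS al S0"
    note IH' = IH[folded \<pi>_def]
    have comp_eq: "\<phi> \<circ> aS al S = \<pi> \<circ> sw a b" unfolding \<pi>_def fun_eq by (simp add: comp_assoc)
    have aSD: "\<And>x. x \<in> D \<Longrightarrow> aS al S0 x \<in> D" using al S0D unfolding aS_def by auto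
    have piD: "\<pi> ` D \<subseteq> D" unfolding \<pi>_def using aSD phD by auto
    have aSinj: "inj_on (aS al S0) D"
    proof (rule inj_onI)
      fix x y assume xy: "x \<in> D" "y \<in> D" "aS al S0 x = aS al S0 y"
      show "x = y"
      proof (cases "x \<in> S0"; cases "y \<in> S0")
        assume "x \<in> S0" "y \<in> S0"
        hence "al x = al y" using xy(3) unfolding aS_def by simp
        hence "al (al x) = al (al y)" by simp
        thus ?thesis using al xy(1,2) by simp
      next
        assume h: "x \<in> S0" "y \<notin> S0"
        hence "al x = y" using xy(3) unfolding aS_def by simp
        thus ?thesis using S0c h by blast
      next
        assume h: "x \<notin> S0" "y \<in> S0"
        hence "x = al y" using xy(3) unfolding aS_def by simp
        thus ?thesis using S0c h by blast
      next
        assume h: "x \<notin> S0" "y \<notin> S0"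
        thus ?thesis using xy(3) unfolding aS_def by simp
      qed
    qed
    have "aS al S0 ` D \<subseteq> D" using aSD by blast
    hence "inj_on \<phi> (aS al S0 ` D)" by (rule inj_on_subset[OF phi])
    hence piinj: "inj_on \<pi> D" unfolding \<pi>_def by (rule comp_inj_on[OF aSinj])
    let ?Ko = "comps D (Gr D \<phi> \<union> Gr D (aS al S0))"
    let ?Kn = "comps D (Gr D \<phi> \<union> Gr D (aS al S))"
    have connK: "conn (Gr D \<phi> \<union> Gr D (aS al S)) = conn (insert (a, b) (Gr D \<phi> \<union> Gr D (aS al S0)))"
    proof
      show "conn (Gr D \<phi> \<union> Gr D (aS al S)) \<subseteq> conn (insert (a, b) (Gr D \<phi> \<union> Gr D (aS al S0)))"
      proof (rule conn_mono, rule subsetI)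
        fix p assume "p \<in> Gr D \<phi> \<union> Gr D (aS al S)"
        then consider "p \<in> Gr D \<phi>" | x where "x \<in> D" "p = (x, aS al S x)" unfolding Gr_def by auto
        then show "p \<in> conn (insert (a, b) (Gr D \<phi> \<union> Gr D (aS al S0)))"
        proof cases
          case 1 then show ?thesis by (auto intro: conn_edgeP)
        next
          case 2
          show ?thesis
          proof (cases "x \<in> S0")
            case True
            then have "p \<in> Gr D (aS al S0)" using 2 unfolding Gr_def aS_def S0_def by auto
            then show ?thesis by (auto intro: conn_edgeP)
          next
            case False
            then have "x = a \<or> x = b \<or> x \<notin> S" unfolding S0_def by auto
            then show ?thesis
            proof (elim disjE)
              assume "x = a"
              hence "p = (a, b)" using 2 a unfolding aS_def b_def by simp
              then show ?thesis by (auto intro: conn_edgeP)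
            next
              assume "x = b"
              hence "p = (b, a)" using 2 bS ba unfolding aS_def by simp
              then show ?thesis using conn_edge'[of a b] by simp
            next
              assume "x \<notin> S"
              hence "p = (x, x)" using 2 unfolding aS_def by simp
              then show ?thesis by simp
            qed
          qed
        qed
      qed
      show "conn (insert (a, b) (Gr D \<phi> \<union> Gr D (aS al S0))) \<subseteq> conn (Gr D \<phi> \<union> Gr D (aS al S))"
      proof (rule conn_mono, rule subsetI)
        fix p assume "p \<in> insert (a, b) (Gr D \<phi> \<union> Gr D (aS al S0))"
        then consider "p = (a, b)" | "p \<in> Gr D \<phi>" | x where "x \<in> D" "p = (x, aS al S0 x)" unfolding Gr_def by auto
        then show "p \<in> conn (Gr D \<phi> \<union> Gr D (aS al S))"
        proof cases
          case 1
          have "(a, aS al S a) \<in> Gr D (aS al S)" using aD unfolding Gr_def by auto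
          then show ?thesis using 1 a unfolding aS_def b_def by (auto intro: conn_edgeP)
        next
          case 2 then show ?thesis by (auto intro: conn_edgeP)
        next
          case 3
          show ?thesis
          proof (cases "x \<in> S0")
            case True
            then have "p \<in> Gr D (aS al S)" using 3 unfolding Gr_def aS_def S0_def by auto
            then show ?thesis by (auto intro: conn_edgeP)
          next
            case False
            then show ?thesis using 3 unfolding aS_def by auto
          qed
        qed
      qed
    qed
    have piconn: "conn (Gr D \<pi>) \<subseteq> conn (Gr D \<phi> \<union> Gr D (aS al S0))"
    proof (rule conn_mono, rule subsetI)
      fix p assume "p \<in> Gr D \<pi>"
      then obtain x where x: "x \<in> D" "p = (x, \<phi> (aS al S0 x))" unfolding Gr_def \<pi>_def by auto
      have h1: "(x, aS al S0 x) \<in> Gr D \<phi> \<union> Gr D (aS al S0)" using x unfolding Gr_def by auto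
      have h2: "(aS al S0 x, \<phi> (aS al S0 x)) \<in> Gr D \<phi> \<union> Gr D (aS al S0)"
        using aSD x unfolding Gr_def by auto
      show "p \<in> conn (Gr D \<phi> \<union> Gr D (aS al S0))"
        using x(2) conn_trans[OF conn_edge[OF h1] conn_edge[OF h2]] by simp
    qed
    show ?thesis
    proof (cases "(a, b) \<in> conn (Gr D \<phi> \<union> Gr D (aS al S0))")
      case True
      have kk: "?Kn = ?Ko" unfolding comps_def connK conn_insert_same[OF True] ..
      have t: "comps D (Gr D (\<pi> \<circ> sw a b)) \<le> comps D (Gr D \<pi>) + 1"
        by (rule T1[OF fin aD bD ab])
      show ?thesis unfolding comp_eq by (rule arith1[OF t IH' cS0 kk])
    next
      case False
      have k1: "?Ko \<le> comps D (insert (a, b) (Gr D \<phi> \<union> Gr D (aS al S0))) + 1" by (rule comps_insert[OF fin aD])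
      have k2: "?Kn = comps D (insert (a, b) (Gr D \<phi> \<union> Gr D (aS al S0)))" unfolding comps_def connK ..
      have kk: "?Ko \<le> ?Kn + 1" using k1 k2 by simp
      have t: "comps D (Gr D (\<pi> \<circ> sw a b)) < comps D (Gr D \<pi>)"
      proof -
        have "(a, b) \<notin> conn (Gr D \<pi>)" using False piconn by blast
        thus ?thesis by (rule T2[OF fin piD piinj aD bD ab])
      qed
      show ?thesis unfolding comp_eq by (rule arith2[OF t IH' cS0 kk])
    qed
  qed
qed

lemma euler:
  assumes fin: "finite D" and phD: "\<phi> ` D \<subseteq> D" and phi: "inj_on \<phi> D"
    and al: "\<forall>x\<in>D. al x \<in> D \<and> al (al x) = x \<and> al x \<noteq> x"
  shows "2 * (comps D (Gr D (\<phi> \<circ> al)) + comps D (Gr D \<phi>)) \<le> card D + 4 * comps D (Gr D \<phi> \<union> Gr D al)"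
proof -
  have "Gr D (\<phi> \<circ> aS al D) = Gr D (\<phi> \<circ> al)" by (rule Gr_cong) (simp add: aS_def)
  moreover have "Gr D (aS al D) = Gr D al" by (rule Gr_cong) (simp add: aS_def)
  ultimately show ?thesis using euler_aux[OF assms, of D] al by simp
qed




lemma conn_inv:
  assumes "\<forall>(x, y)\<in>E. q x = q y" "(x, y) \<in> conn E"
  shows "q x = q y"
  using assms(2) unfolding conn_def
proof (induction rule: rtrancl_induct)
  case base then show ?case by simp
next
  case (step v w)
  have "q v = q w" using step.hyps(2) assms(1) by auto
  then show ?case using step.IH by simp
qed

lemma L_inv:
  assumes "finite D" "\<forall>(x, y)\<in>E. q x = q y"
  shows "card (q ` D) \<le> comps D E"
proof -
  let ?h = "\<lambda>X. q (SOME x. x \<in> X)"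
  have "q ` D \<subseteq> ?h ` (D // conn E)"
  proof
    fix z assume "z \<in> q ` D"
    then obtain x where x: "x \<in> D" "z = q x" by auto
    have X: "conn E `` {x} \<in> D // conn E" using x(1) by (rule quotientI)
    have "x \<in> conn E `` {x}" by simp
    hence "(SOME y. y \<in> conn E `` {x}) \<in> conn E `` {x}" by (rule someI)
    hence "(x, SOME y. y \<in> conn E `` {x}) \<in> conn E" by simp
    hence "q x = ?h (conn E `` {x})" by (rule conn_inv[OF assms(2)])
    thus "z \<in> ?h ` (D // conn E)" using X x(2) by blast
  qed
  hence "card (q ` D) \<le> card (?h ` (D // conn E))"
    by (rule card_mono[rotated]) (simp add: finite_quot assms(1))
  also have "\<dots> \<le> card (D // conn E)" by (rule card_image_le[OF finite_quot[OF assms(1)]])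
  finally show ?thesis unfolding comps_def .
qed

lemma comps_add_many:
  assumes "finite D" "finite A" "\<forall>p\<in>A. fst p \<in> D"
  shows "comps D E \<le> comps D (E \<union> A) + card A"
  using assms(2,3)
proof (induction A rule: finite_induct)
  case empty then show ?case by simp
next
  case (insert p F)
  obtain a b where p: "p = (a, b)" by (cases p)
  have aD: "a \<in> D" using insert.prems p by simp
  have "comps D E \<le> comps D (E \<union> F) + card F" using insert by simp
  also have "comps D (E \<union> F) \<le> comps D (insert (a, b) (E \<union> F)) + 1" by (rule comps_insert[OF assms(1) aD])
  finally show ?case using insert.hyps p by simp
qed

lemma lift_path:
  assumes lift: "\<And>x y e. (x, y) \<in> E \<Longrightarrow> (\<exists>e'. ((x, e), (y, e')) \<in> conn E') \<and> (\<exists>e'. ((y, e), (x, e')) \<in> conn E')"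
    and "(x, y) \<in> conn E"
  shows "\<exists>e'. ((x, e), (y, e')) \<in> conn E'"
  using assms(2) unfolding conn_def[of E]
proof (induction rule: rtrancl_induct)
  case base then show ?case by (intro exI[of _ e]) simp
next
  case (step v w)
  then obtain e1 where e1: "((x, e), (v, e1)) \<in> conn E'" by blast
  have "\<exists>e2. ((v, e1), (w, e2)) \<in> conn E'"
  proof (cases "(v, w) \<in> E")
    case True then show ?thesis using lift[OF True] by blast
  next
    case False
    hence "(w, v) \<in> E" using step.hyps(2) by auto
    then show ?thesis using lift[OF \<open>(w, v) \<in> E\<close>] by blast
  qed
  then obtain e2 where "((v, e1), (w, e2)) \<in> conn E'" by blast
  then show ?case using conn_trans[OF e1] by blast
qed

lemma cover_merge:
  fixes E :: "('a \<times> 'a) set" and E' :: "(('a \<times> bool) \<times> ('a \<times> bool)) set"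
  assumes fin: "finite D"
    and lift: "\<And>x y e. (x, y) \<in> E \<Longrightarrow> (\<exists>e'. ((x, e), (y, e')) \<in> conn E') \<and> (\<exists>e'. ((y, e), (x, e')) \<in> conn E')"
    and x0: "x0 \<in> D" "((x0, False), (x0, True)) \<in> conn E'"
  shows "comps (D \<times> UNIV) E' + 1 \<le> 2 * comps D E"
proof -
  define Q where "Q = D // conn E"
  define r where "r X = (SOME z. z \<in> X)" for X :: "'a set"
  define fib where "fib X = {conn E' `` {(r X, False)}, conn E' `` {(r X, True)}}" for X
  have finQ: "finite Q" unfolding Q_def by (rule finite_quot[OF fin])
  have rX: "(y, r (conn E `` {y})) \<in> conn E" for y
  proof -
    have "y \<in> conn E `` {y}" by simp
    hence "r (conn E `` {y}) \<in> conn E `` {y}" unfolding r_def by (rule someI)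
    thus ?thesis by simp
  qed
  have sub: "(D \<times> UNIV) // conn E' \<subseteq> (\<Union>X\<in>Q. fib X)"
  proof
    fix Z assume "Z \<in> (D \<times> UNIV) // conn E'"
    then obtain y e where ye: "y \<in> D" "Z = conn E' `` {(y, e)}" unfolding quotient_def by auto
    let ?X = "conn E `` {y}"
    have XQ: "?X \<in> Q" unfolding Q_def using ye(1) by (rule quotientI)
    obtain e' where e': "((y, e), (r ?X, e')) \<in> conn E'" using lift_path[OF lift rX[of y]] by blast
    have "Z = conn E' `` {(r ?X, e')}" using ye(2) conn_Image_eq[OF e'] by simp
    hence "Z \<in> fib ?X" unfolding fib_def by (cases e') auto
    thus "Z \<in> (\<Union>X\<in>Q. fib X)" using XQ by blast
  qed
  have c2: "card (fib X) \<le> 2" for X unfolding fib_def by (simp add: card_insert_if)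
  define X0 where "X0 = conn E `` {x0}"
  have X0Q: "X0 \<in> Q" unfolding Q_def X0_def using x0(1) by (rule quotientI)
  have c1: "card (fib X0) \<le> 1"
  proof -
    have rx: "(r X0, x0) \<in> conn E" using conn_sym[OF rX[of x0]] unfolding X0_def .
    obtain e1 where e1: "((r X0, False), (x0, e1)) \<in> conn E'" using lift_path[OF lift rx] by blast
    obtain e2 where e2: "((r X0, True), (x0, e2)) \<in> conn E'" using lift_path[OF lift rx] by blast
    have xe: "((x0, e), (x0, False)) \<in> conn E'" for e
      by (cases e) (simp_all add: conn_sym[OF x0(2)])
    have "((r X0, False), (r X0, True)) \<in> conn E'"
      using conn_trans[OF conn_trans[OF e1 xe] conn_sym[OF conn_trans[OF e2 xe]]] .
    hence "conn E' `` {(r X0, False)} = conn E' `` {(r X0, True)}" by (rule conn_Image_eq)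
    thus ?thesis unfolding fib_def by simp
  qed
  have "card ((D \<times> UNIV) // conn E') \<le> card (\<Union>X\<in>Q. fib X)"
    by (rule card_mono[OF _ sub]) (simp add: finQ fib_def)
  also have "\<dots> \<le> (\<Sum>X\<in>Q. card (fib X))" by (rule card_UN_le[OF finQ])
  also have "\<dots> = card (fib X0) + (\<Sum>X\<in>Q - {X0}. card (fib X))"
    by (rule sum.remove[OF finQ X0Q])
  also have "\<dots> \<le> 1 + (\<Sum>X\<in>Q - {X0}. 2)"
    by (rule add_mono[OF c1 sum_mono]) (rule c2)
  also have "\<dots> = 1 + 2 * (card Q - 1)" using X0Q finQ by (simp add: card_Diff_singleton)
  finally have "card ((D \<times> UNIV) // conn E') \<le> 1 + 2 * (card Q - 1)" .
  moreover have "card Q \<noteq> 0" using X0Q finQ by auto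
  hence "card Q \<ge> 1" by simp
  ultimately show ?thesis unfolding comps_def Q_def by linarith
qed

lemma sheet:
  fixes E :: "('a \<times> 'a) set" and E' :: "(('a \<times> bool) \<times> ('a \<times> bool)) set"
  assumes lift: "\<And>x y e. (x, y) \<in> E \<Longrightarrow> (\<exists>e'. ((x, e), (y, e')) \<in> conn E') \<and> (\<exists>e'. ((y, e), (x, e')) \<in> conn E')"
    and nm: "((y, False), (y, True)) \<notin> conn E'"
    and r_def: "r = (SOME z. z \<in> conn E `` {y})"
  shows "((y, e), (r, False)) \<in> conn E' \<longleftrightarrow> (e \<noteq> (((y, False), (r, False)) \<in> conn E'))"
proof -
  have "y \<in> conn E `` {y}" by simp
  hence "r \<in> conn E `` {y}" unfolding r_def by (rule someI)
  hence ry: "(r, y) \<in> conn E" using conn_sym by simp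
  obtain e0 where e0: "((r, False), (y, e0)) \<in> conn E'" using lift_path[OF lift ry] by blast
  have e0': "((y, e0), (r, False)) \<in> conn E'" using conn_sym[OF e0] .
  have notboth: "\<not> (((y, False), (r, False)) \<in> conn E' \<and> ((y, True), (r, False)) \<in> conn E')"
  proof
    assume h: "((y, False), (r, False)) \<in> conn E' \<and> ((y, True), (r, False)) \<in> conn E'"
    hence "((y, False), (y, True)) \<in> conn E'" using conn_trans[OF _ conn_sym[of "(y, True)" "(r, False)"]] by blast
    thus False using nm by simp
  qed
  show ?thesis
  proof (cases e0)
    case True
    then show ?thesis using e0' notboth by (cases e) auto
  next
    case False
    then show ?thesis using e0' notboth by (cases e) auto
  qed
qed




lemma lt2: "(j::nat) < 2 \<longleftrightarrow> j = 0 \<or> j = 1" by arith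
lemma lt4: "(k::nat) < 4 \<longleftrightarrow> k = 0 \<or> k = 1 \<or> k = 2 \<or> k = 3" by arith

lemma sides_mem: "(i, j, k) \<in> sides ts \<longleftrightarrow> i \<le> length ts \<and> j < length (cbd ts i) \<and> k < length (cbd ts i ! j)"
  by (simp add: sides_def)

lemma cbd0: "cbd ts 0 = [[Red, Blue, Red, Blue]]"
  by (simp add: cbd_def root_bd_def)

lemma cbdS: "i \<noteq> 0 \<Longrightarrow> cbd ts i = cell_bd (ts ! (i - 1))"
  by (simp add: cbd_def)

lemma cbd_len: "length (cbd ts i) \<le> 2"
proof (cases "i = 0")
  case True then show ?thesis by (simp add: cbd0)
next
  case False then show ?thesis by (cases "ts ! (i - 1)") (simp_all add: cbdS)
qed

lemma cbd_circ_len: "j < length (cbd ts i) \<Longrightarrow> length (cbd ts i ! j) = 2 \<or> length (cbd ts i ! j) = 4"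
proof (cases "i = 0")
  case True then show "j < length (cbd ts i) \<Longrightarrow> ?thesis" by (simp add: cbd0)
next
  case False then show "j < length (cbd ts i) \<Longrightarrow> ?thesis"
    by (cases "ts ! (i - 1)") (auto simp: cbdS less_Suc_eq)
qed

lemma cbd_circ_pos: "j < length (cbd ts i) \<Longrightarrow> 0 < length (cbd ts i ! j)"
  using cbd_circ_len by fastforce

lemma cbd_circ_le4: "j < length (cbd ts i) \<Longrightarrow> length (cbd ts i ! j) \<le> 4"
  using cbd_circ_len by fastforce

lemma cbd_even_red: "j < length (cbd ts i) \<Longrightarrow> even (length (filter (\<lambda>c. c = Red) (cbd ts i ! j)))"
proof (cases "i = 0")
  case True then show "j < length (cbd ts i) \<Longrightarrow> ?thesis" by (simp add: cbd0)
next
  case False then show "j < length (cbd ts i) \<Longrightarrow> ?thesis"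
    by (cases "ts ! (i - 1)") (auto simp: cbdS less_Suc_eq)
qed

lemma cbd_two: "length (cbd ts i) = 2 \<Longrightarrow> i \<noteq> 0 \<and> \<not> is_disc (ts ! (i - 1))"
proof (cases "i = 0")
  case True then show "length (cbd ts i) = 2 \<Longrightarrow> ?thesis" by (simp add: cbd0)
next
  case False then show "length (cbd ts i) = 2 \<Longrightarrow> ?thesis"
    by (cases "ts ! (i - 1)") (auto simp: cbdS)
qed

definition pk :: "nat \<Rightarrow> nat" where "pk k = (if even k then Suc k else k - 1)"

lemma cell_blue_pair:
  assumes "t \<noteq> CheqQuad" "j < length (cell_bd t)" "k < length (cell_bd t ! j)" "cell_bd t ! j ! k = Blue"
  shows "pk k < length (cell_bd t ! j) \<and> cell_bd t ! j ! pk k = Blue"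
  using assms by (cases t) (auto simp: less_Suc_eq pk_def)

lemma nxt_eq: "nxt ts (i, j, k) = (i, j, (k + 1) mod length (cbd ts i ! j))"
  by (simp add: nxt_def)

lemma mod_suc_lt: "k < (L::nat) \<Longrightarrow> (k + 1) mod L = (if k + 1 = L then 0 else k + 1)"
  by auto

lemma finite_sides: "finite (sides ts)"
proof (rule finite_subset)
  show "sides ts \<subseteq> {..length ts} \<times> {..<(2::nat)} \<times> {..<(4::nat)}"
  proof
    fix s assume "s \<in> sides ts"
    then obtain i j k where s: "s = (i, j, k)" "i \<le> length ts" "j < length (cbd ts i)" "k < length (cbd ts i ! j)"
      by (cases s) (auto simp: sides_mem)
    have "j < 2" using s(3) cbd_len[of ts i] by simp
    moreover have "k < 4" using s(4) cbd_circ_le4[OF s(3)] by simp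
    ultimately show "s \<in> {..length ts} \<times> {..<(2::nat)} \<times> {..<(4::nat)}" using s by simp
  qed
  show "finite ({..length ts} \<times> {..<(2::nat)} \<times> {..<(4::nat)})" by simp
qed

lemma nxt_in: "s \<in> sides ts \<Longrightarrow> nxt ts s \<in> sides ts"
proof -
  assume "s \<in> sides ts"
  then obtain i j k where s: "s = (i, j, k)" "i \<le> length ts" "j < length (cbd ts i)" "k < length (cbd ts i ! j)"
    by (cases s) (auto simp: sides_mem)
  have "(k + 1) mod length (cbd ts i ! j) < length (cbd ts i ! j)"
    using cbd_circ_pos[OF s(3)] by simp
  then show ?thesis using s by (simp add: sides_mem nxt_eq)
qed

lemma nxt_inj: "inj_on (nxt ts) (sides ts)"
proof (rule inj_onI)
  fix s t assume st: "s \<in> sides ts" "t \<in> sides ts" "nxt ts s = nxt ts t"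
  obtain i j k where s: "s = (i, j, k)" by (cases s)
  obtain i' j' k' where t: "t = (i', j', k')" by (cases t)
  have eq: "i = i'" "j = j'" "(k + 1) mod length (cbd ts i ! j) = (k' + 1) mod length (cbd ts i ! j)"
    using st(3) unfolding s t nxt_eq by auto
  have "k < length (cbd ts i ! j)" "k' < length (cbd ts i ! j)" using st(1,2) s t eq by (auto simp: sides_mem)
  hence "k = k'" using eq(3) mod_suc_lt by (auto split: if_splits)
  then show "s = t" using s t eq by simp
qed

lemma nxt_lt: "(i, j, k) \<in> sides ts \<Longrightarrow> k + 1 < length (cbd ts i ! j) \<Longrightarrow> nxt ts (i, j, k) = (i, j, k + 1)"
  by (simp add: nxt_eq)

lemma funpow_nxt: "(i, j, 0) \<in> sides ts \<Longrightarrow> k < length (cbd ts i ! j) \<Longrightarrow> (nxt ts ^^ k) (i, j, 0) = (i, j, k)"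
proof (induction k)
  case 0 then show ?case by simp
next
  case (Suc k)
  then have "(nxt ts ^^ k) (i, j, 0) = (i, j, k)" by simp
  then show ?case using Suc.prems by (simp add: nxt_eq)
qed

lemma even_inv:
  assumes "finite A" "\<forall>x\<in>A. f x \<in> A \<and> f (f x) = x \<and> f x \<noteq> x"
  shows "even (card A)"
  using assms
proof (induction "card A" arbitrary: A rule: less_induct)
  case less
  show ?case
  proof (cases "A = {}")
    case True then show ?thesis by simp
  next
    case False
    then obtain x where x: "x \<in> A" by auto
    let ?A = "A - {x, f x}"
    have fx: "f x \<in> A" "f x \<noteq> x" "f (f x) = x" using less.prems(2) x by auto
    have c: "card A = card ?A + 2"
    proof -
      have s2: "{x, f x} \<subseteq> A" using x fx by simp
      have "card ?A = card A - card {x, f x}" using card_Diff_subset[OF finite_subset[OF s2 less.prems(1)] s2] .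
      moreover have "card {x, f x} = 2" using fx by simp
      moreover have "card {x, f x} \<le> card A" using card_mono[OF less.prems(1) s2] .
      ultimately show ?thesis by simp
    qed
    have "\<forall>y\<in>?A. f y \<in> ?A \<and> f (f y) = y \<and> f y \<noteq> y"
    proof
      fix y assume y: "y \<in> ?A"
      have y': "y \<in> A" "y \<noteq> x" "y \<noteq> f x" using y by auto
      have "f y \<noteq> x" using y' less.prems(2) fx by metis
      moreover have "f y \<noteq> f x" using y' less.prems(2) x by metis
      ultimately show "f y \<in> ?A \<and> f (f y) = y \<and> f y \<noteq> y" using y' less.prems(2) by auto
    qed
    hence "even (card ?A)" using less.hyps[of ?A] c less.prems(1) by simp
    then show ?thesis using c by simp
  qed
qed

lemma sum_atMost_shift: "(\<Sum>i\<le>n. f i) = f 0 + (\<Sum>i<n. f (Suc i))"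
  by (induction n) (simp_all add: lessThan_Suc ac_simps)

lemma sum_cell_len: "(\<Sum>i<length ts. length (cell_bd (ts ! i))) = length (filter is_disc ts) + 2 * length (filter (\<lambda>t. \<not> is_disc t) ts)"
proof (induction ts)
  case Nil then show ?case by simp
next
  case (Cons t ts)
  have "(\<Sum>i<length (t # ts). length (cell_bd ((t # ts) ! i))) = length (cell_bd t) + (\<Sum>i<length ts. length (cell_bd (ts ! i)))"
    by (simp only: length_Cons sum.lessThan_Suc_shift nth_Cons_0 nth_Cons_Suc)
  then show ?case using Cons by (cases t) simp_all
qed




definition redS :: "cell_type list \<Rightarrow> side \<Rightarrow> bool" where
  "redS ts s = (side_color ts s = Red)"
definition phc :: "cell_type list \<Rightarrow> side \<times> bool \<Rightarrow> side \<times> bool" where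
  "phc ts p = (nxt ts (fst p), snd p \<noteq> redS ts (fst p))"
definition alc :: "cell_type list \<Rightarrow> (side \<Rightarrow> side) \<Rightarrow> side \<times> bool \<Rightarrow> side \<times> bool" where
  "alc ts alpha p = (alpha (fst p), snd p \<noteq> redS ts (fst p))"
definition Ecov :: "cell_type list \<Rightarrow> (side \<Rightarrow> side) \<Rightarrow> ((side \<times> bool) \<times> (side \<times> bool)) set" where
  "Ecov ts alpha = Gr (sides ts \<times> UNIV) (phc ts) \<union> Gr (sides ts \<times> UNIV) (alc ts alpha)"
definition Ebase :: "cell_type list \<Rightarrow> (side \<Rightarrow> side) \<Rightarrow> (side \<times> side) set" where
  "Ebase ts alpha = Gr (sides ts) (nxt ts) \<union> Gr (sides ts) alpha"

definition vg :: "cell_type list \<Rightarrow> (side \<Rightarrow> side) \<Rightarrow> bool" where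
  "vg ts alpha = (\<forall>s\<in>sides ts. alpha s \<in> sides ts \<and> alpha (alpha s) = s \<and> alpha s \<noteq> s
        \<and> side_color ts (alpha s) = side_color ts s)"

lemma Gr_mem: "x \<in> D \<Longrightarrow> (x, f x) \<in> Gr D f"
  unfolding Gr_def by blast

lemma vgI: "UM0_ABAB ts alpha \<Longrightarrow> vg ts alpha"
  unfolding UM0_ABAB_def valid_gluing_def vg_def by blast

lemma vg_red: "vg ts alpha \<Longrightarrow> s \<in> sides ts \<Longrightarrow> redS ts (alpha s) = redS ts s"
  unfolding vg_def redS_def by simp

lemma lift_cov:
  assumes v: "vg ts alpha" and xy: "(x, y) \<in> Ebase ts alpha"
  shows "(\<exists>e'. ((x, e), (y, e')) \<in> conn (Ecov ts alpha)) \<and> (\<exists>e'. ((y, e), (x, e')) \<in> conn (Ecov ts alpha))"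
proof -
  let ?D = "sides ts"
  have x: "x \<in> ?D" and cases: "y = nxt ts x \<or> y = alpha x" using xy unfolding Ebase_def Gr_def by auto
  from cases show ?thesis
  proof
    assume y: "y = nxt ts x"
    have "((x, e), phc ts (x, e)) \<in> Gr (sides ts \<times> UNIV) (phc ts)" using x by (intro Gr_mem) simp
    hence e1: "((x, e), (y, e \<noteq> redS ts x)) \<in> Ecov ts alpha"
      using y unfolding Ecov_def phc_def by simp
    have "((x, e \<noteq> redS ts x), phc ts (x, e \<noteq> redS ts x)) \<in> Gr (sides ts \<times> UNIV) (phc ts)" using x by (intro Gr_mem) simp
    moreover have "phc ts (x, e \<noteq> redS ts x) = (y, e)" using y unfolding phc_def by auto
    ultimately have e2: "((x, e \<noteq> redS ts x), (y, e)) \<in> Ecov ts alpha"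
      unfolding Ecov_def by simp
    show ?thesis using conn_edge[OF e1] conn_edge'[OF e2] by blast
  next
    assume y: "y = alpha x"
    have "((x, e), alc ts alpha (x, e)) \<in> Gr (sides ts \<times> UNIV) (alc ts alpha)" using x by (intro Gr_mem) simp
    hence e1: "((x, e), (y, e \<noteq> redS ts x)) \<in> Ecov ts alpha"
      using y unfolding Ecov_def alc_def by simp
    have "((x, e \<noteq> redS ts x), alc ts alpha (x, e \<noteq> redS ts x)) \<in> Gr (sides ts \<times> UNIV) (alc ts alpha)" using x by (intro Gr_mem) simp
    moreover have "alc ts alpha (x, e \<noteq> redS ts x) = (y, e)" using y unfolding alc_def by auto
    ultimately have e2: "((x, e \<noteq> redS ts x), (y, e)) \<in> Ecov ts alpha"
      unfolding Ecov_def by simp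
    show ?thesis using conn_edge[OF e1] conn_edge'[OF e2] by blast
  qed
qed

lemma alpha_inj: "vg ts alpha \<Longrightarrow> inj_on alpha (sides ts)"
  unfolding vg_def by (metis inj_onI)

lemma vert_class:
  assumes v: "vg ts alpha" and s: "s \<in> sides ts"
  shows "vert_rel ts alpha `` {s} = vert_rel ts alpha `` {(nxt ts \<circ> alpha) s}"
proof -
  let ?D = "sides ts"
  let ?f = "nxt ts \<circ> alpha"
  have fD: "?f ` ?D \<subseteq> ?D"
  proof (rule image_subsetI)
    fix x assume "x \<in> ?D"
    hence "alpha x \<in> ?D" using v unfolding vg_def by blast
    thus "?f x \<in> ?D" using nxt_in by simp
  qed
  have "alpha ` ?D \<subseteq> ?D" using v unfolding vg_def by auto
  hence "inj_on (nxt ts) (alpha ` ?D)" using inj_on_subset[OF nxt_inj] by blast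
  hence fI: "inj_on ?f ?D" by (rule comp_inj_on[OF alpha_inj[OF v]])
  have fs: "?f s \<in> ?D" using fD s by blast
  obtain p where p: "p > 0" "(?f ^^ p) s = s" using period[OF finite_sides fD fI s] by blast
  then obtain p' where p': "p = Suc p'" by (cases p) auto
  have iff: "(\<exists>n. t = (?f ^^ n) s) \<longleftrightarrow> (\<exists>n. t = (?f ^^ n) (?f s))" for t
  proof
    assume "\<exists>n. t = (?f ^^ n) s"
    then obtain n where n: "t = (?f ^^ n) s" by blast
    have "(?f ^^ (n + p')) (?f s) = (?f ^^ Suc (n + p')) s" by (simp only: funpow_Suc_right comp_apply)
    also have "Suc (n + p') = n + p" using p' by simp
    finally have "(?f ^^ (n + p')) (?f s) = (?f ^^ (n + p)) s" .
    also have "\<dots> = (?f ^^ n) ((?f ^^ p) s)" by (simp only: funpow_add comp_apply)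
    finally have "(?f ^^ (n + p')) (?f s) = t" using n p(2) by simp
    thus "\<exists>n. t = (?f ^^ n) (?f s)" by metis
  next
    assume "\<exists>n. t = (?f ^^ n) (?f s)"
    then obtain n where "t = (?f ^^ n) (?f s)" by blast
    hence "t = (?f ^^ Suc n) s" by (simp only: funpow_Suc_right comp_apply)
    thus "\<exists>n. t = (?f ^^ n) s" by blast
  qed
  show ?thesis
  proof (rule set_eqI)
    fix t
    show "t \<in> vert_rel ts alpha `` {s} \<longleftrightarrow> t \<in> vert_rel ts alpha `` {?f s}"
      using iff[of t] s fs unfolding vert_rel_def by simp
  qed
qed

lemma bound_vert:
  assumes v: "vg ts alpha"
  shows "2 * num_vertices ts alpha \<le> comps (sides ts \<times> UNIV) (Gr (sides ts \<times> UNIV) (phc ts \<circ> alc ts alpha))"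
proof -
  let ?D = "sides ts"
  let ?Dc = "?D \<times> (UNIV :: bool set)"
  define q where "q p = (vert_rel ts alpha `` {fst p}, snd p)" for p :: "side \<times> bool"
  have inv: "\<forall>(x, y)\<in>Gr ?Dc (phc ts \<circ> alc ts alpha). q x = q y"
  proof (clarify)
    fix a b x y assume "((a, b), (x, y)) \<in> Gr ?Dc (phc ts \<circ> alc ts alpha)"
    hence a: "a \<in> ?D" "(x, y) = (phc ts \<circ> alc ts alpha) (a, b)" unfolding Gr_def by auto
    hence xy: "x = (nxt ts \<circ> alpha) a" "y = b"
      using vg_red[OF v a(1)] unfolding phc_def alc_def by auto
    show "q (a, b) = q (x, y)" unfolding q_def using vert_class[OF v a(1)] xy by simp
  qed
  have "q ` ?Dc = (?D // vert_rel ts alpha) \<times> UNIV"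
  proof
    show "q ` ?Dc \<subseteq> (?D // vert_rel ts alpha) \<times> UNIV" unfolding q_def quotient_def by auto
    show "(?D // vert_rel ts alpha) \<times> UNIV \<subseteq> q ` ?Dc"
    proof
      fix z assume "z \<in> (?D // vert_rel ts alpha) \<times> (UNIV :: bool set)"
      then obtain s b where sb: "s \<in> ?D" "z = (vert_rel ts alpha `` {s}, b)" unfolding quotient_def by auto
      have "q (s, b) = z" unfolding q_def sb by simp
      moreover have "(s, b) \<in> ?Dc" using sb by simp
      ultimately show "z \<in> q ` ?Dc" by (metis imageI)
    qed
  qed
  hence "card (q ` ?Dc) = 2 * num_vertices ts alpha"
    unfolding num_vertices_def by (simp add: card_cartesian_product)
  moreover have "card (q ` ?Dc) \<le> comps ?Dc (Gr ?Dc (phc ts \<circ> alc ts alpha))"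
    by (rule L_inv[OF _ inv]) (simp add: finite_sides)
  ultimately show ?thesis by simp
qed

definition hS :: "cell_type list \<Rightarrow> side \<Rightarrow> bool" where
  "hS ts s = odd (length (filter (\<lambda>c. c = Red) (take (snd (snd s)) (cbd ts (fst s) ! fst (snd s)))))"

lemma hS_nxt:
  assumes s: "s \<in> sides ts"
  shows "hS ts (nxt ts s) = (hS ts s \<noteq> redS ts s)"
proof -
  obtain i j k where sijk: "s = (i, j, k)" by (cases s)
  let ?l = "cbd ts i ! j"
  have j: "j < length (cbd ts i)" and k: "k < length ?l" using s sijk by (auto simp: sides_mem)
  have rs: "redS ts (i, j, k) = (?l ! k = Red)" unfolding redS_def side_color_def by simp
  have tk: "take (Suc k) ?l = take k ?l @ [?l ! k]" by (rule take_Suc_conv_app_nth[OF k])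
  show ?thesis
  proof (cases "k + 1 = length ?l")
    case True
    have "nxt ts s = (i, j, 0)" unfolding sijk nxt_eq using True by simp
    hence h0: "hS ts (nxt ts s) = False" unfolding hS_def by simp
    have "take (Suc k) ?l = ?l" using True by simp
    hence "even (length (filter (\<lambda>c. c = Red) (take k ?l @ [?l ! k])))" using cbd_even_red[OF j] tk by simp
    hence "hS ts (i, j, k) = redS ts (i, j, k)" unfolding hS_def rs by auto
    hence "hS ts s = redS ts s" using sijk by simp
    then show ?thesis using h0 by simp
  next
    case False
    have "nxt ts s = (i, j, Suc k)" unfolding sijk nxt_eq using False k by simp
    hence "hS ts (nxt ts s) = odd (length (filter (\<lambda>c. c = Red) (take k ?l @ [?l ! k])))"
      unfolding hS_def using tk by simp
    hence "hS ts (nxt ts s) = (hS ts (i, j, k) \<noteq> redS ts (i, j, k))" unfolding hS_def rs by auto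
    then show ?thesis using sijk by simp
  qed
qed

lemma card_circ:
  "card ((\<lambda>s. (fst s, fst (snd s))) ` sides ts) = num_discs ts + 2 * length (filter (\<lambda>t. \<not> is_disc t) ts)"
proof -
  have eq: "(\<lambda>s. (fst s, fst (snd s))) ` sides ts = (SIGMA i:{..length ts}. {..<length (cbd ts i)})"
  proof
    show "(\<lambda>s. (fst s, fst (snd s))) ` sides ts \<subseteq> (SIGMA i:{..length ts}. {..<length (cbd ts i)})"
      by (auto simp: sides_def)
    show "(SIGMA i:{..length ts}. {..<length (cbd ts i)}) \<subseteq> (\<lambda>s. (fst s, fst (snd s))) ` sides ts"
    proof
      fix p assume "p \<in> (SIGMA i:{..length ts}. {..<length (cbd ts i)})"
      then obtain i j where p: "p = (i, j)" "i \<le> length ts" "j < length (cbd ts i)" by auto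
      have "(i, j, 0) \<in> sides ts" using p cbd_circ_pos[OF p(3)] by (simp add: sides_mem)
      thus "p \<in> (\<lambda>s. (fst s, fst (snd s))) ` sides ts" using p(1) by force
    qed
  qed
  have "card (SIGMA i:{..length ts}. {..<length (cbd ts i)}) = (\<Sum>i\<le>length ts. length (cbd ts i))"
    by (simp add: card_SigmaI)
  also have "\<dots> = length (cbd ts 0) + (\<Sum>i<length ts. length (cbd ts (Suc i)))"
    by (rule sum_atMost_shift)
  also have "\<dots> = 1 + (\<Sum>i<length ts. length (cell_bd (ts ! i)))"
    by (simp add: cbd0 cbdS)
  also have "\<dots> = num_discs ts + 2 * length (filter (\<lambda>t. \<not> is_disc t) ts)"
    unfolding sum_cell_len num_discs_def by simp
  finally show ?thesis unfolding eq .
qed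

lemma bound_circ:
  "2 * (num_discs ts + 2 * length (filter (\<lambda>t. \<not> is_disc t) ts)) \<le> comps (sides ts \<times> UNIV) (Gr (sides ts \<times> UNIV) (phc ts))"
proof -
  let ?D = "sides ts"
  let ?Dc = "?D \<times> (UNIV :: bool set)"
  let ?c = "\<lambda>s::side. (fst s, fst (snd s))"
  define q where "q p = (?c (fst p), snd p \<noteq> hS ts (fst p))" for p :: "side \<times> bool"
  have inv: "\<forall>(x, y)\<in>Gr ?Dc (phc ts). q x = q y"
  proof (clarify)
    fix a b x y assume "((a, b), (x, y)) \<in> Gr ?Dc (phc ts)"
    hence a: "a \<in> ?D" "(x, y) = phc ts (a, b)" unfolding Gr_def by auto
    hence xy: "x = nxt ts a" "y = (b \<noteq> redS ts a)" unfolding phc_def by auto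
    have "?c (nxt ts a) = ?c a" by (cases a) (simp add: nxt_eq)
    moreover have "hS ts (nxt ts a) = (hS ts a \<noteq> redS ts a)" by (rule hS_nxt[OF a(1)])
    ultimately show "q (a, b) = q (x, y)" unfolding q_def xy by auto
  qed
  have "q ` ?Dc = (?c ` ?D) \<times> UNIV"
  proof
    show "q ` ?Dc \<subseteq> (?c ` ?D) \<times> UNIV" unfolding q_def by auto
    show "(?c ` ?D) \<times> UNIV \<subseteq> q ` ?Dc"
    proof
      fix z assume "z \<in> (?c ` ?D) \<times> (UNIV :: bool set)"
      then obtain s b where sb: "s \<in> ?D" "z = (?c s, b)" by auto
      have "q (s, b \<noteq> hS ts s) = z" unfolding q_def sb by auto
      moreover have "(s, b \<noteq> hS ts s) \<in> ?Dc" using sb by simp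
      ultimately show "z \<in> q ` ?Dc" by (metis imageI)
    qed
  qed
  hence "card (q ` ?Dc) = 2 * (num_discs ts + 2 * length (filter (\<lambda>t. \<not> is_disc t) ts))"
    using card_circ[of ts] by (simp add: card_cartesian_product)
  moreover have "card (q ` ?Dc) \<le> comps ?Dc (Gr ?Dc (phc ts))"
    by (rule L_inv[OF _ inv]) (simp add: finite_sides)
  ultimately show ?thesis by simp
qed




lemma cbd_ne: "0 < length (cbd ts i)"
proof (cases "i = 0")
  case True then show ?thesis by (simp add: cbd0)
next
  case False then show ?thesis by (cases "ts ! (i - 1)") (simp_all add: cbdS)
qed

lemma circle_conn:
  assumes s: "(i, j, k) \<in> sides ts" and sub: "Gr (sides ts) (nxt ts) \<subseteq> E"
  shows "((i, j, 0), (i, j, k)) \<in> conn E"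
proof -
  have j: "j < length (cbd ts i)" and k: "k < length (cbd ts i ! j)" and i: "i \<le> length ts"
    using s by (auto simp: sides_mem)
  have s0: "(i, j, 0) \<in> sides ts" using i j cbd_circ_pos[OF j] by (simp add: sides_mem)
  have nD: "nxt ts ` sides ts \<subseteq> sides ts" using nxt_in by blast
  have "((i, j, 0), (nxt ts ^^ k) (i, j, 0)) \<in> conn (Gr (sides ts) (nxt ts))" by (rule path_P[OF nD s0])
  hence "((i, j, 0), (i, j, k)) \<in> conn (Gr (sides ts) (nxt ts))" using funpow_nxt[OF s0 k] by simp
  thus ?thesis using conn_subset[OF sub] by blast
qed

lemma bound_K0:
  assumes um: "UM0_ABAB ts alpha"
  shows "comps (sides ts) (Ebase ts alpha) \<le> 1 + length (filter (\<lambda>t. \<not> is_disc t) ts)"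
proof -
  let ?D = "sides ts"
  let ?n = "length ts"
  define Icy where "Icy = {i. 1 \<le> i \<and> i \<le> ?n \<and> \<not> is_disc (ts ! (i - 1))}"
  define Cy where "Cy = (\<lambda>i. ((i, 0::nat, 0::nat), (i, 1::nat, 0::nat))) ` Icy"
  have Icy_eq: "Icy = Suc ` {i. i < ?n \<and> \<not> is_disc (ts ! i)}"
  proof
    show "Icy \<subseteq> Suc ` {i. i < ?n \<and> \<not> is_disc (ts ! i)}"
    proof
      fix i assume "i \<in> Icy"
      hence i: "1 \<le> i" "i \<le> ?n" "\<not> is_disc (ts ! (i - 1))" unfolding Icy_def by auto
      hence "i - 1 \<in> {i. i < ?n \<and> \<not> is_disc (ts ! i)}" by auto
      moreover have "i = Suc (i - 1)" using i by simp
      ultimately show "i \<in> Suc ` {i. i < ?n \<and> \<not> is_disc (ts ! i)}" by blast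
    qed
    show "Suc ` {i. i < ?n \<and> \<not> is_disc (ts ! i)} \<subseteq> Icy" unfolding Icy_def by auto
  qed
  have cIcy: "card Icy = length (filter (\<lambda>t. \<not> is_disc t) ts)"
    unfolding Icy_eq length_filter_conv_card by (simp add: card_image)
  have finIcy: "finite Icy" unfolding Icy_eq by simp
  have cCy: "card Cy \<le> card Icy" unfolding Cy_def by (rule card_image_le[OF finIcy])
  have finCy: "finite Cy" unfolding Cy_def using finIcy by simp
  have fstCy: "\<forall>p\<in>Cy. fst p \<in> ?D"
  proof
    fix p assume "p \<in> Cy"
    then obtain i where i: "i \<in> Icy" "p = ((i, 0, 0), (i, 1, 0))" unfolding Cy_def by auto
    have "i \<le> ?n" using i(1) unfolding Icy_def by simp
    thus "fst p \<in> ?D" using i(2) cbd_ne[of ts i] cbd_circ_pos[OF cbd_ne[of ts i]] by (simp add: sides_mem)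
  qed
  have step1: "comps ?D (Ebase ts alpha) \<le> comps ?D (Ebase ts alpha \<union> Cy) + card Cy"
    by (rule comps_add_many[OF finite_sides finCy fstCy])
  let ?C = "conn (Ebase ts alpha \<union> Cy)"
  have subN: "Gr ?D (nxt ts) \<subseteq> Ebase ts alpha \<union> Cy" unfolding Ebase_def by auto
  have adj_sub: "adj_rel ts alpha \<subseteq> ?C"
  proof
    fix p assume "p \<in> adj_rel ts alpha"
    hence "(\<exists>s. s \<in> ?D \<and> p = (s, alpha s)) \<or> (\<exists>s t. s \<in> ?D \<and> t \<in> ?D \<and> fst s = fst t \<and> p = (s, t))"
      unfolding adj_rel_def by blast
    then show "p \<in> ?C"
    proof (elim disjE exE conjE)
      fix s assume 1: "s \<in> ?D" "p = (s, alpha s)"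
      have "(s, alpha s) \<in> Gr ?D alpha" by (rule Gr_mem[OF 1(1)])
      hence "(s, alpha s) \<in> Ebase ts alpha \<union> Cy" unfolding Ebase_def by blast
      hence "(s, alpha s) \<in> ?C" by (rule conn_edge)
      then show ?thesis using 1(2) by simp
    next
      fix s t assume 2: "s \<in> ?D" "t \<in> ?D" "fst s = fst t" "p = (s, t)"
      obtain i j k where s: "s = (i, j, k)" by (cases s)
      obtain i' j' k' where t: "t = (i', j', k')" by (cases t)
      have ii: "i' = i" using 2(3) s t by simp
      have sD: "(i, j, k) \<in> ?D" and tD: "(i, j', k') \<in> ?D" using 2 s t ii by auto
      have c1: "((i, j, 0), (i, j, k)) \<in> ?C" by (rule circle_conn[OF sD subN])
      have c2: "((i, j', 0), (i, j', k')) \<in> ?C" by (rule circle_conn[OF tD subN])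
      have jj: "((i, j, 0), (i, j', 0)) \<in> ?C"
      proof (cases "j = j'")
        case True then show ?thesis by simp
      next
        case False
        have jl: "j < length (cbd ts i)" "j' < length (cbd ts i)" "i \<le> ?n" using sD tD by (auto simp: sides_mem)
        have l2: "length (cbd ts i) = 2" using jl False cbd_len[of ts i] by linarith
        have ic: "i \<noteq> 0 \<and> \<not> is_disc (ts ! (i - 1))" by (rule cbd_two[OF l2])
        hence "i \<in> Icy" using jl(3) unfolding Icy_def by auto
        hence e: "((i, 0, 0), (i, 1, 0)) \<in> ?C" unfolding Cy_def by (intro conn_edge) auto
        have "(j = 0 \<and> j' = 1) \<or> (j = 1 \<and> j' = 0)" using jl l2 False by auto
        then show ?thesis
        proof
          assume "j = 0 \<and> j' = 1" then show ?thesis using e by simp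
        next
          assume "j = 1 \<and> j' = 0" then show ?thesis using conn_sym[OF e] by simp
        qed
      qed
      have "((i, j, k), (i, j', k')) \<in> ?C" using conn_trans[OF conn_trans[OF conn_sym[OF c1] jj] c2] .
      then show ?thesis using 2(4) s t ii by simp
    qed
  qed
  have "conn (adj_rel ts alpha) \<subseteq> ?C" by (rule conn_mono[OF adj_sub])
  hence step2: "comps ?D (Ebase ts alpha \<union> Cy) \<le> comps ?D (adj_rel ts alpha)"
    by (rule comps_mono[OF finite_sides])
  have step3: "comps ?D (adj_rel ts alpha) \<le> 1"
  proof -
    have cm: "\<forall>s\<in>?D. \<forall>t\<in>?D. (s, t) \<in> (adj_rel ts alpha)\<^sup>*"
      using um unfolding UM0_ABAB_def connected_map_def by blast
    have sub: "(adj_rel ts alpha)\<^sup>* \<subseteq> conn (adj_rel ts alpha)"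
      unfolding conn_def by (rule rtrancl_mono) blast
    have "\<forall>X\<in>?D // conn (adj_rel ts alpha). \<forall>Y\<in>?D // conn (adj_rel ts alpha). X = Y"
    proof (intro ballI)
      fix X Y assume "X \<in> ?D // conn (adj_rel ts alpha)" "Y \<in> ?D // conn (adj_rel ts alpha)"
      then obtain x y where xy: "x \<in> ?D" "y \<in> ?D" "X = conn (adj_rel ts alpha) `` {x}" "Y = conn (adj_rel ts alpha) `` {y}"
        unfolding quotient_def by auto
      have "(x, y) \<in> (adj_rel ts alpha)\<^sup>*" using cm xy(1,2) by blast
      hence "(x, y) \<in> conn (adj_rel ts alpha)" using sub by blast
      thus "X = Y" using xy(3,4) conn_Image_eq[OF \<open>(x, y) \<in> conn (adj_rel ts alpha)\<close>] by simp
    qed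
    thus ?thesis unfolding comps_def using card_le_Suc0_iff_eq[OF finite_quot[OF finite_sides]] by simp
  qed
  show ?thesis using step1 step2 step3 cCy cIcy by linarith
qed

lemma cover_props:
  assumes v: "vg ts alpha"
  shows "phc ts ` (sides ts \<times> UNIV) \<subseteq> sides ts \<times> UNIV"
    "inj_on (phc ts) (sides ts \<times> UNIV)"
    "\<forall>p\<in>sides ts \<times> UNIV. alc ts alpha p \<in> sides ts \<times> UNIV \<and> alc ts alpha (alc ts alpha p) = p \<and> alc ts alpha p \<noteq> p"
proof -
  show "phc ts ` (sides ts \<times> UNIV) \<subseteq> sides ts \<times> UNIV" unfolding phc_def using nxt_in by auto
  show "inj_on (phc ts) (sides ts \<times> UNIV)"
  proof (rule inj_onI)
    fix p q assume pq: "p \<in> sides ts \<times> UNIV" "q \<in> sides ts \<times> UNIV" "phc ts p = phc ts q"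
    have "nxt ts (fst p) = nxt ts (fst q)" using pq(3) unfolding phc_def by simp
    hence f: "fst p = fst q" using inj_onD[OF nxt_inj] pq(1,2) by auto
    hence "snd p = snd q" using pq(3) unfolding phc_def by auto
    thus "p = q" using f by (simp add: prod_eq_iff)
  qed
  show "\<forall>p\<in>sides ts \<times> UNIV. alc ts alpha p \<in> sides ts \<times> UNIV \<and> alc ts alpha (alc ts alpha p) = p \<and> alc ts alpha p \<noteq> p"
  proof
    fix p :: "side \<times> bool" assume "p \<in> sides ts \<times> UNIV"
    hence f: "fst p \<in> sides ts" by auto
    have a: "alpha (fst p) \<in> sides ts" "alpha (alpha (fst p)) = fst p" "alpha (fst p) \<noteq> fst p"
      using v f unfolding vg_def by auto
    have r: "redS ts (alpha (fst p)) = redS ts (fst p)" by (rule vg_red[OF v f])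
    show "alc ts alpha p \<in> sides ts \<times> UNIV \<and> alc ts alpha (alc ts alpha p) = p \<and> alc ts alpha p \<noteq> p"
      using a r unfolding alc_def by (auto simp: prod_eq_iff)
  qed
qed

lemma even_sides: "vg ts alpha \<Longrightarrow> even (card (sides ts))"
proof -
  assume v: "vg ts alpha"
  have "\<forall>x\<in>sides ts. alpha x \<in> sides ts \<and> alpha (alpha x) = x \<and> alpha x \<noteq> x" using v unfolding vg_def by auto
  thus ?thesis by (rule even_inv[OF finite_sides])
qed

lemma arith_final:
  fixes c1 c2 cD K' V Nd Nc m K0 :: nat
  assumes "2 * (c1 + c2) \<le> 2 * cD + 4 * K'" "2 * V \<le> c1" "2 * (Nd + 2 * Nc) \<le> c2"
   "cD = 2 * m" "V + Nd = 2 + m" "K0 \<le> 1 + Nc" "K' + 1 \<le> 2 * K0"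
  shows False
  using assms unfolding distrib_left by linarith

lemma no_merge:
  assumes um: "UM0_ABAB ts alpha" and x: "x \<in> sides ts"
  shows "((x, False), (x, True)) \<notin> conn (Ecov ts alpha)"
proof
  assume mg: "((x, False), (x, True)) \<in> conn (Ecov ts alpha)"
  have v: "vg ts alpha" by (rule vgI[OF um])
  let ?D = "sides ts"
  let ?Dc = "?D \<times> (UNIV :: bool set)"
  have m: "comps ?Dc (Ecov ts alpha) + 1 \<le> 2 * comps ?D (Ebase ts alpha)"
    by (rule cover_merge[OF finite_sides lift_cov[OF v] x mg])
  have fDc: "finite ?Dc" by (simp add: finite_sides)
  have cp: "phc ts ` ?Dc \<subseteq> ?Dc" "inj_on (phc ts) ?Dc"
    "\<forall>p\<in>?Dc. alc ts alpha p \<in> ?Dc \<and> alc ts alpha (alc ts alpha p) = p \<and> alc ts alpha p \<noteq> p"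
    using cover_props[OF v] by auto
  have eu: "2 * (comps ?Dc (Gr ?Dc (phc ts \<circ> alc ts alpha)) + comps ?Dc (Gr ?Dc (phc ts))) \<le> card ?Dc + 4 * comps ?Dc (Gr ?Dc (phc ts) \<union> Gr ?Dc (alc ts alpha))"
    by (rule euler[OF fDc cp(1) cp(2) cp(3)])
  have cDc: "card ?Dc = 2 * card ?D" by (simp add: card_cartesian_product)
  obtain mm where mm: "card ?D = 2 * mm" using even_sides[OF v] by (rule evenE)
  have chi: "euler_char ts alpha = 2" using um unfolding UM0_ABAB_def by simp
  hence "num_vertices ts alpha + num_discs ts = 2 + mm"
    unfolding euler_char_def num_edges_def using mm by simp
  note vv = this
  have eu': "2 * (comps ?Dc (Gr ?Dc (phc ts \<circ> alc ts alpha)) + comps ?Dc (Gr ?Dc (phc ts))) \<le> 2 * card ?D + 4 * comps ?Dc (Ecov ts alpha)"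
    using eu unfolding cDc Ecov_def .
  show False
    by (rule arith_final[OF eu' bound_vert[OF v] bound_circ mm vv bound_K0[OF um] m])
qed




lemma card_pick:
  assumes "a \<noteq> b" "g a \<noteq> g b"
  shows "card {s. s \<in> {a, b} \<and> g s} = 1"
proof (cases "g a")
  case True
  hence "{s. s \<in> {a, b} \<and> g s} = {a}" using assms by auto
  then show ?thesis by simp
next
  case False
  hence "{s. s \<in> {a, b} \<and> g s} = {b}" using assms by auto
  then show ?thesis by simp
qed

theorem main_cheq:
  fixes ts :: "cell_type list" and alpha :: "side \<Rightarrow> side"
  assumes um: "UM0_ABAB ts alpha"
  shows "CheqQuad \<in> set ts"
proof (rule ccontr)
  assume nc: "CheqQuad \<notin> set ts"
  have v: "vg ts alpha" by (rule vgI[OF um])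
  let ?D = "sides ts"
  let ?Dc = "?D \<times> (UNIV :: bool set)"
  let ?E = "Ebase ts alpha"
  let ?E' = "Ecov ts alpha"
  have lift: "\<And>x y e. (x, y) \<in> ?E \<Longrightarrow> (\<exists>e'. ((x, e), (y, e')) \<in> conn ?E') \<and> (\<exists>e'. ((y, e), (x, e')) \<in> conn ?E')"
    by (rule lift_cov[OF v])
  define r where "r y = (SOME z. z \<in> conn ?E `` {y})" for y
  define g where "g y = (((y, False), (r y, False)) \<in> conn ?E')" for y
  have sh: "((y, e), (r y, False)) \<in> conn ?E' \<longleftrightarrow> (e \<noteq> g y)" if y: "y \<in> ?D" for y e
    unfolding g_def by (rule sheet[OF lift no_merge[OF um y] r_def])
  have gedge: "(e \<noteq> g s) = (e' \<noteq> g t)"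
    if st: "s \<in> ?D" "t \<in> ?D" "(s, t) \<in> conn ?E" "((s, e), (t, e')) \<in> conn ?E'" for s t e e'
  proof -
    have rr: "r s = r t" unfolding r_def using conn_Image_eq[OF st(3)] by simp
    have "((s, e), (r s, False)) \<in> conn ?E' \<longleftrightarrow> ((t, e'), (r s, False)) \<in> conn ?E'"
      using conn_trans[OF st(4)] conn_trans[OF conn_sym[OF st(4)]] by blast
    thus ?thesis using sh[OF st(1)] sh[OF st(2)] rr by simp
  qed
  have Gnxt: "g (nxt ts s) = (g s \<noteq> redS ts s)" if s: "s \<in> ?D" for s
  proof -
    have ns: "nxt ts s \<in> ?D" by (rule nxt_in[OF s])
    have "(s, nxt ts s) \<in> Gr ?D (nxt ts)" by (rule Gr_mem[OF s])
    hence b: "(s, nxt ts s) \<in> conn ?E" unfolding Ebase_def by (intro conn_edge) blast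
    have "((s, False), phc ts (s, False)) \<in> Gr ?Dc (phc ts)" using s by (intro Gr_mem) simp
    moreover have "phc ts (s, False) = (nxt ts s, redS ts s)" unfolding phc_def by simp
    ultimately have "((s, False), (nxt ts s, redS ts s)) \<in> ?E'" unfolding Ecov_def by simp
    hence c: "((s, False), (nxt ts s, redS ts s)) \<in> conn ?E'" by (rule conn_edge)
    have "(False \<noteq> g s) = (redS ts s \<noteq> g (nxt ts s))" by (rule gedge[OF s ns b c])
    thus ?thesis by auto
  qed
  have Gal: "g (alpha s) = (g s \<noteq> redS ts s)" if s: "s \<in> ?D" for s
  proof -
    have ns: "alpha s \<in> ?D" using v s unfolding vg_def by blast
    have "(s, alpha s) \<in> Gr ?D alpha" by (rule Gr_mem[OF s])
    hence b: "(s, alpha s) \<in> conn ?E" unfolding Ebase_def by (intro conn_edge) blast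
    have "((s, False), alc ts alpha (s, False)) \<in> Gr ?Dc (alc ts alpha)" using s by (intro Gr_mem) simp
    moreover have "alc ts alpha (s, False) = (alpha s, redS ts s)" unfolding alc_def by simp
    ultimately have "((s, False), (alpha s, redS ts s)) \<in> ?E'" unfolding Ecov_def by simp
    hence c: "((s, False), (alpha s, redS ts s)) \<in> conn ?E'" by (rule conn_edge)
    have "(False \<noteq> g s) = (redS ts s \<noteq> g (alpha s))" by (rule gedge[OF s ns b c])
    thus ?thesis by auto
  qed
  define B where "B = {s \<in> ?D. side_color ts s = Blue \<and> g s}"
  have finB: "finite B" unfolding B_def using finite_sides by simp
  have evenB: "even (card B)"
  proof (rule even_inv[OF finB])
    show "\<forall>x\<in>B. alpha x \<in> B \<and> alpha (alpha x) = x \<and> alpha x \<noteq> x"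
    proof
      fix x assume "x \<in> B"
      hence x: "x \<in> ?D" "side_color ts x = Blue" "g x" unfolding B_def by auto
      have a: "alpha x \<in> ?D" "alpha (alpha x) = x" "alpha x \<noteq> x" "side_color ts (alpha x) = side_color ts x"
        using v x(1) unfolding vg_def by auto
      have "\<not> redS ts x" using x(2) unfolding redS_def by simp
      hence "g (alpha x)" using Gal[OF x(1)] x(3) by simp
      thus "alpha x \<in> B \<and> alpha (alpha x) = x \<and> alpha x \<noteq> x" using a x unfolding B_def by simp
    qed
  qed
  define Bn where "Bn = {s \<in> B. fst s \<noteq> 0}"
  define Br where "Br = {s \<in> B. fst s = 0}"
  define psi where "psi s = (fst s, fst (snd s), pk (snd (snd s)))" for s :: side
  have finBn: "finite Bn" unfolding Bn_def using finB by simp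
  have evenBn: "even (card Bn)"
  proof (rule even_inv[OF finBn])
    show "\<forall>x\<in>Bn. psi x \<in> Bn \<and> psi (psi x) = x \<and> psi x \<noteq> x"
    proof
      fix x assume xB: "x \<in> Bn"
      obtain i j k where x: "x = (i, j, k)" by (cases x)
      have xD: "(i, j, k) \<in> ?D" and blue: "side_color ts (i, j, k) = Blue" and gx: "g (i, j, k)" and i0: "i \<noteq> 0"
        using xB x unfolding Bn_def B_def by auto
      have il: "i \<le> length ts" and jl: "j < length (cbd ts i)" and kl: "k < length (cbd ts i ! j)"
        using xD by (auto simp: sides_mem)
      have tin: "ts ! (i - 1) \<in> set ts" using il i0 by simp
      hence tnc: "ts ! (i - 1) \<noteq> CheqQuad" using nc by auto
      have cb: "cbd ts i = cell_bd (ts ! (i - 1))" by (rule cbdS[OF i0])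
      have bl: "cbd ts i ! j ! k = Blue" using blue unfolding side_color_def by simp
      have pp: "pk k < length (cbd ts i ! j) \<and> cbd ts i ! j ! pk k = Blue"
        using cell_blue_pair[OF tnc jl[unfolded cb] kl[unfolded cb] bl[unfolded cb]] unfolding cb .
      have pD: "(i, j, pk k) \<in> ?D" using il jl pp by (simp add: sides_mem)
      have pblue: "side_color ts (i, j, pk k) = Blue" using pp unfolding side_color_def by simp
      have gp: "g (i, j, pk k) = g (i, j, k)"
      proof (cases "even k")
        case True
        hence pk: "pk k = k + 1" unfolding pk_def by simp
        have "nxt ts (i, j, k) = (i, j, k + 1)" by (rule nxt_lt[OF xD]) (use pp pk in simp)
        moreover have "\<not> redS ts (i, j, k)" using blue unfolding redS_def by simp
        ultimately show ?thesis using Gnxt[OF xD] pk by simp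
      next
        case False
        hence pk: "pk k = k - 1" unfolding pk_def by simp
        have k1: "k \<ge> 1" using False by (cases k) auto
        have "nxt ts (i, j, k - 1) = (i, j, k - 1 + 1)" by (rule nxt_lt[OF pD[unfolded pk]]) (use kl k1 in simp)
        hence nn: "nxt ts (i, j, pk k) = (i, j, k)" using k1 pk by simp
        have "\<not> redS ts (i, j, pk k)" using pblue unfolding redS_def by simp
        then show ?thesis using Gnxt[OF pD] nn by simp
      qed
      have ppk: "pk (pk k) = k" unfolding pk_def by (auto simp: odd_pos)
      have pne: "pk k \<noteq> k" unfolding pk_def by (cases k) auto
      have "psi x \<in> Bn" using pD pblue gp gx i0 unfolding Bn_def B_def psi_def x by simp
      moreover have "psi (psi x) = x" unfolding psi_def x using ppk by simp
      moreover have "psi x \<noteq> x" unfolding psi_def x using pne by simp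
      ultimately show "psi x \<in> Bn \<and> psi (psi x) = x \<and> psi x \<noteq> x" by simp
    qed
  qed
  have r1: "(0::nat, 0::nat, 1::nat) \<in> ?D" "(0::nat, 0::nat, 2::nat) \<in> ?D" "(0::nat, 0::nat, 3::nat) \<in> ?D"
    by (simp_all add: sides_mem cbd0)
  have g2: "g (0, 0, 2) = g (0, 0, 1)"
  proof -
    have "nxt ts (0, 0, 1) = (0, 0, 2)" by (simp add: nxt_eq cbd0)
    moreover have "\<not> redS ts (0, 0, 1)" by (simp add: redS_def side_color_def cbd0)
    ultimately show ?thesis using Gnxt[OF r1(1)] by simp
  qed
  have g3: "g (0, 0, 3) = (\<not> g (0, 0, 2))"
  proof -
    have "nxt ts (0, 0, 2) = (0, 0, 3)" by (simp add: nxt_eq cbd0)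
    moreover have "redS ts (0, 0, 2)" by (simp add: redS_def side_color_def cbd0)
    ultimately show ?thesis using Gnxt[OF r1(2)] by simp
  qed
  have Br_eq: "Br = {s. s \<in> {(0, 0, 1), (0, 0, 3)} \<and> g s}"
  proof (rule set_eqI)
    fix s :: side
    obtain i j k where s: "s = (i, j, k)" by (cases s)
    show "s \<in> Br \<longleftrightarrow> s \<in> {s. s \<in> {(0, 0, 1), (0, 0, 3)} \<and> g s}"
    proof
      assume "s \<in> Br"
      hence h: "i = 0" "(i, j, k) \<in> ?D" "side_color ts (i, j, k) = Blue" "g (i, j, k)"
        unfolding Br_def B_def s by auto
      have "j = 0" "k < 4" using h(1,2) by (auto simp: sides_mem cbd0)
      moreover have "[Red, Blue, Red, Blue] ! k = Blue" using h(1,3) \<open>j = 0\<close> by (simp add: side_color_def cbd0)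
      ultimately have "k = 1 \<or> k = 3" using lt4[of k] by auto
      thus "s \<in> {s. s \<in> {(0, 0, 1), (0, 0, 3)} \<and> g s}" using h(1,4) \<open>j = 0\<close> s by auto
    next
      assume "s \<in> {s. s \<in> {(0, 0, 1), (0, 0, 3)} \<and> g s}"
      then show "s \<in> Br" unfolding Br_def B_def using r1 by (auto simp: side_color_def cbd0)
    qed
  qed
  have cBr: "card Br = 1" unfolding Br_eq by (rule card_pick) (use g2 g3 in auto)
  have "B = Bn \<union> Br" "Bn \<inter> Br = {}" unfolding Bn_def Br_def by auto
  hence "card B = card Bn + card Br"
    using card_Un_disjoint finB by (metis finite_Un)
  hence "odd (card B)" using evenBn cBr by simp
  thus False using evenB by simp
qed



theorem lemma1:
  fixes ts :: "cell_type list" and alpha :: "side \<Rightarrow> side"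
  assumes "UM0_ABAB ts alpha"
  shows "CheqQuad \<in> set ts \<or> OppCyl \<in> set ts"
  using main_cheq[OF assms] by simp

end
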